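(* Let $G$ be a finite unitary reflection group on $V$ with an $A$-root system $(\Sigma,f)$, and let $P$ be a parabolic subgroup of $G$ of Coxeter type. Let $\Sigma_P$ be the set of $a\in\Sigma$ such that $\mathbb{C}a$ is the root line of some reflection in $P$. Assume: (Hypothesis 1) there is a subset $\Phi\subseteq\Sigma_P$ which is a root system of the Coxeter group $P$, i.e. $(a,b)\in\mathbb{R}$ for all $a,b\in\Phi$, $\Phi\cap\mathbb{R}a=\{\pm a\}$ and $r_a(\Phi)=\Phi$ for all $a\in\Phi$ (where $r_a$ is the reflection of order 2 with root $a$), and $P$ is generated by $\{r_a:a\in\Phi\}$, these being exactly the reflections of $P$; (Hypothesis 2) the group of roots of unity in $A$ is $\langle-1\rangle\times\langle\gamma\rangle$ where $\gamma$ has odd order $h$. Let $\Delta$ be a simple system of $\Phi$ and put $\widetilde\Delta=\bigcup_{i=0}^{h-1}\gamma^i\Delta$. Then the setwise stabiliser $G_{\widetilde\Delta}=\{g\in G: g(\widetilde\Delta)=\widetilde\Delta\}$ is a complement to $P$ in $N_G(P)$.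
   Context: $V$ is a finite-dimensional complex vector space with a positive definite Hermitian form $(-,-)$. A reflection is a finite-order linear map of $V$ whose fixed space is a hyperplane; a unitary reflection group is a finite group of form-preserving linear maps generated by reflections. For a non-zero $a\in V$ and root of unity $\zeta\neq1$, $r_{a,\zeta}(v)=v-(1-\zeta)\frac{(v,a)}{(a,a)}a$. A parabolic subgroup is the pointwise stabiliser in $G$ of a subset of $V$. $P$ is of Coxeter type if it is generated by a set $S$ of reflections such that $(P,S)$ is a Coxeter system. $A$-root system: let $F$ be a finite abelian extension of $\mathbb{Q}$ with ring of integers $A$ and group of roots of unity $\boldsymbol\mu$, and $U$ an $F$-space with Hermitian product such that $V=\mathbb{C}\otimes_FU$. An $A$-root system for $G$ is a pair $(\Sigma,f)$ with $\Sigma\subseteq U$ spanning $U$, $0\notin\Sigma$, $f:\Sigma\to\boldsymbol\mu$, such that $G$ is generated by $\{r_{a,f(a)}:a\in\Sigma\}$ and: (i) for $a\in\Sigma$, $\lambda\in F$: $\lambda a\in\Sigma$ iff $\lambda\in\boldsymbol\mu$; (ii) $f(\lambda a)=f(a)\ne1$ for $\lambda\in\boldsymbol\mu$; (iii) $(1-f(b))(a,b)/(b,b)\in A$ for $a,b\in\Sigma$; (iv) $r_{a,f(a)}(b)\in\Sigma$ and $f(r_{a,f(a)}(b))=f(b)$. A simple system $\Delta$ of $\Phi$ is a subset forming a basis of the real span of $\Phi$ such that every element of $\Phi$ is a linear combination of $\Delta$ with all coefficients $\ge0$ or all $\le0$. A complement to $P$ in $N_G(P)$ is a subgroup $H$ with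 $N_G(P)=PH$ and $P\cap H=1$. *)

theory Defs
  imports "HOL-Analysis.Analysis" "HOL-Computational_Algebra.Polynomial"
          "HOL-Algebra.Generated_Groups" "HOL-Algebra.Multiplicative_Group"
begin

type_synonym 'n cvec = "complex ^ 'n"
type_synonym 'n cmap = "complex ^ 'n \<Rightarrow> complex ^ 'n"

definition herm_form :: "('n::finite cvec \<Rightarrow> 'n cvec \<Rightarrow> complex) \<Rightarrow> bool" where
  "herm_form B \<longleftrightarrow>
     (\<forall>x y z. B (x + y) z = B x z + B y z) \<and>
     (\<forall>c x y. B (c *s x) y = c * B x y) \<and>
     (\<forall>x y. B y x = cnj (B x y)) \<and>
     (\<forall>x. x \<noteq> 0 \<longrightarrow> Re (B x x) > 0)"

definition clinear :: "'n::finite cmap \<Rightarrow> bool" where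
  "clinear g \<longleftrightarrow> Vector_Spaces.linear (*s) (*s) g"

definition fixed_space :: "'n::finite cmap \<Rightarrow> 'n cvec set" where
  "fixed_space g = {v. g v = v}"

definition is_reflection :: "'n::finite cmap \<Rightarrow> bool" where
  "is_reflection g \<longleftrightarrow> clinear g \<and> (\<exists>k>0. (g ^^ k) = id) \<and>
     vec.dim (fixed_space g) = CARD('n) - 1"

definition form_preserving :: "('n::finite cvec \<Rightarrow> 'n cvec \<Rightarrow> complex) \<Rightarrow> 'n cmap \<Rightarrow> bool" where
  "form_preserving B g \<longleftrightarrow> (\<forall>u v. B (g u) (g v) = B u v)"

inductive_set gen_by :: "('a \<Rightarrow> 'a) set \<Rightarrow> ('a \<Rightarrow> 'a) set" for S where
  gen_id: "id \<in> gen_by S"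
| gen_mult: "s \<in> S \<Longrightarrow> g \<in> gen_by S \<Longrightarrow> s \<circ> g \<in> gen_by S"
| gen_inv: "s \<in> S \<Longrightarrow> g \<in> gen_by S \<Longrightarrow> Hilbert_Choice.inv s \<circ> g \<in> gen_by S"

definition is_map_group :: "('a \<Rightarrow> 'a) set \<Rightarrow> bool" where
  "is_map_group G \<longleftrightarrow> id \<in> G \<and> (\<forall>g\<in>G. bij g \<and> Hilbert_Choice.inv g \<in> G) \<and> (\<forall>g\<in>G. \<forall>h\<in>G. g \<circ> h \<in> G)"

definition unitary_reflection_group ::
  "('n::finite cvec \<Rightarrow> 'n cvec \<Rightarrow> complex) \<Rightarrow> 'n cmap set \<Rightarrow> bool" where
  "unitary_reflection_group B G \<longleftrightarrow> finite G \<and> is_map_group G \<and>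
     (\<forall>g\<in>G. clinear g \<and> form_preserving B g) \<and>
     G = gen_by {g\<in>G. is_reflection g}"

definition refl :: "('n::finite cvec \<Rightarrow> 'n cvec \<Rightarrow> complex) \<Rightarrow> 'n cvec \<Rightarrow> complex \<Rightarrow> 'n cmap" where
  "refl B a \<zeta> = (\<lambda>v. v - ((1 - \<zeta>) * B v a / B a a) *s a)"

definition root_line :: "('n::finite cvec \<Rightarrow> 'n cvec \<Rightarrow> complex) \<Rightarrow> 'n cmap \<Rightarrow> 'n cvec set" where
  "root_line B r = {v. \<forall>w\<in>fixed_space r. B w v = 0}"

definition parabolic :: "'n::finite cmap set \<Rightarrow> 'n cmap set \<Rightarrow> bool" where
  "parabolic G P \<longleftrightarrow> (\<exists>X. P = {g\<in>G. \<forall>v\<in>X. g v = v})"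

definition maps_grp :: "('a \<Rightarrow> 'a) set \<Rightarrow> ('a \<Rightarrow> 'a) monoid" where
  "maps_grp M = \<lparr>carrier = M, mult = (\<lambda>f g. f \<circ> g), one = id\<rparr>"

text \<open>Coxeter system (W,S): W generated by involutions S and presented by
  the relations (st)^{m(s,t)} = 1, m(s,t) the order of st (m = 0 means infinite,
  no relation).  The presentation is expressed by its universal property, tested
  against all groups whose carrier lives in a countable type (which suffices since
  the presented group is countable when S is).\<close>
definition coxeter_system :: "('a, 'b) monoid_scheme \<Rightarrow> 'a set \<Rightarrow> bool" where
  "coxeter_system W S \<longleftrightarrow> group W \<and> S \<subseteq> carrier W \<and>
     (\<forall>s\<in>S. s \<noteq> \<one>\<^bsub>W\<^esub> \<and> s \<otimes>\<^bsub>W\<^esub> s = \<one>\<^bsub>W\<^esub>) \<and>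
     generate W S = carrier W \<and>
     (\<forall>(H :: nat monoid) \<phi>. group H \<longrightarrow> \<phi> \<in> S \<rightarrow> carrier H \<longrightarrow>
        (\<forall>s\<in>S. \<forall>t\<in>S. (\<phi> s \<otimes>\<^bsub>H\<^esub> \<phi> t) [^]\<^bsub>H\<^esub> group.ord W (s \<otimes>\<^bsub>W\<^esub> t) = \<one>\<^bsub>H\<^esub>) \<longrightarrow>
        (\<exists>\<psi>\<in>hom W H. \<forall>s\<in>S. \<psi> s = \<phi> s))"

definition coxeter_type :: "'n::finite cmap set \<Rightarrow> bool" where
  "coxeter_type P \<longleftrightarrow> (\<exists>S\<subseteq>P. (\<forall>s\<in>S. is_reflection s) \<and> P = gen_by S \<and>
      coxeter_system (maps_grp P) S)"

definition subfield :: "complex set \<Rightarrow> bool" where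
  "subfield F \<longleftrightarrow> 0 \<in> F \<and> 1 \<in> F \<and> (\<forall>x\<in>F. \<forall>y\<in>F. x + y \<in> F \<and> x * y \<in> F \<and> - x \<in> F) \<and>
     (\<forall>x\<in>F. x \<noteq> 0 \<longrightarrow> inverse x \<in> F)"

definition field_embedding :: "complex set \<Rightarrow> (complex \<Rightarrow> complex) \<Rightarrow> bool" where
  "field_embedding F \<sigma> \<longleftrightarrow> \<sigma> 1 = 1 \<and>
     (\<forall>x\<in>F. \<forall>y\<in>F. \<sigma> (x + y) = \<sigma> x + \<sigma> y \<and> \<sigma> (x * y) = \<sigma> x * \<sigma> y)"

definition finite_abelian_ext :: "complex set \<Rightarrow> bool" where
  "finite_abelian_ext F \<longleftrightarrow> subfield F \<and>
     (\<exists>S. finite S \<and> S \<subseteq> F \<and> (\<forall>x\<in>F. \<exists>c. (\<forall>s\<in>S. c s \<in> \<rat>) \<and> x = (\<Sum>s\<in>S. c s * s))) \<and>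
     \<comment> \<open>normal (hence Galois, char 0): every embedding into C maps F onto F\<close>
     (\<forall>\<sigma>. field_embedding F \<sigma> \<longrightarrow> \<sigma> ` F = F) \<and>
     \<comment> \<open>abelian Galois group\<close>
     (\<forall>\<sigma> \<tau>. field_embedding F \<sigma> \<longrightarrow> field_embedding F \<tau> \<longrightarrow>
        (\<forall>x\<in>F. \<sigma> (\<tau> x) = \<tau> (\<sigma> x)))"

definition ring_of_integers :: "complex set \<Rightarrow> complex set" where
  "ring_of_integers F = {x\<in>F. algebraic_int x}"

definition roots_of_unity_in :: "complex set \<Rightarrow> complex set" where
  "roots_of_unity_in A = {z\<in>A. \<exists>n>0. z ^ n = 1}"

definition fspan :: "complex set \<Rightarrow> 'n::finite cvec set \<Rightarrow> 'n cvec set" where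
  "fspan F S = {(\<Sum>x\<in>T. c x *s x) | T c. finite T \<and> T \<subseteq> S \<and> (\<forall>x\<in>T. c x \<in> F)}"

text \<open>U is an F-form of V with Hermitian product: V = C \<otimes>_F U, i.e. U is the
  F-span of a C-basis of V, and the form takes values in F on U.\<close>
definition F_form :: "complex set \<Rightarrow> ('n::finite cvec \<Rightarrow> 'n cvec \<Rightarrow> complex) \<Rightarrow> 'n cvec set \<Rightarrow> bool" where
  "F_form F B U \<longleftrightarrow> (\<exists>b. finite b \<and> vec.independent b \<and> vec.span b = UNIV \<and> U = fspan F b) \<and>
     (\<forall>u\<in>U. \<forall>v\<in>U. B u v \<in> F)"

definition A_root_system ::
  "complex set \<Rightarrow> ('n::finite cvec \<Rightarrow> 'n cvec \<Rightarrow> complex) \<Rightarrow> 'n cvec set \<Rightarrow> 'n cmap set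
    \<Rightarrow> 'n cvec set \<Rightarrow> ('n cvec \<Rightarrow> complex) \<Rightarrow> bool" where
  "A_root_system F B U G \<Sigma> f \<longleftrightarrow>
     (let A = ring_of_integers F; \<mu> = roots_of_unity_in A in
       \<Sigma> \<subseteq> U \<and> fspan F \<Sigma> = U \<and> 0 \<notin> \<Sigma> \<and> (\<forall>a\<in>\<Sigma>. f a \<in> \<mu>) \<and>
       G = gen_by ((\<lambda>a. refl B a (f a)) ` \<Sigma>) \<and>
       (\<forall>a\<in>\<Sigma>. \<forall>c\<in>F. c *s a \<in> \<Sigma> \<longleftrightarrow> c \<in> \<mu>) \<and>
       (\<forall>a\<in>\<Sigma>. \<forall>c\<in>\<mu>. f (c *s a) = f a \<and> f a \<noteq> 1) \<and>
       (\<forall>a\<in>\<Sigma>. \<forall>b\<in>\<Sigma>. (1 - f b) * B a b / B b b \<in> A) \<and>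
       (\<forall>a\<in>\<Sigma>. \<forall>b\<in>\<Sigma>. refl B a (f a) b \<in> \<Sigma> \<and> f (refl B a (f a) b) = f b))"

definition simple_system :: "'n::finite cvec set \<Rightarrow> 'n cvec set \<Rightarrow> bool" where
  "simple_system \<Phi> \<Delta> \<longleftrightarrow> \<Delta> \<subseteq> \<Phi> \<and> finite \<Delta> \<and> independent \<Delta> \<and> span \<Delta> = span \<Phi> \<and>
     (\<forall>a\<in>\<Phi>. \<exists>c. a = (\<Sum>d\<in>\<Delta>. c d *\<^sub>R d) \<and> ((\<forall>d\<in>\<Delta>. 0 \<le> c d) \<or> (\<forall>d\<in>\<Delta>. c d \<le> 0)))"

definition normaliser :: "('a \<Rightarrow> 'a) set \<Rightarrow> ('a \<Rightarrow> 'a) set \<Rightarrow> ('a \<Rightarrow> 'a) set" where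
  "normaliser G P = {g\<in>G. (\<lambda>p. g \<circ> p \<circ> Hilbert_Choice.inv g) ` P = P}"

definition complement_in :: "('a \<Rightarrow> 'a) set \<Rightarrow> ('a \<Rightarrow> 'a) set \<Rightarrow> ('a \<Rightarrow> 'a) set \<Rightarrow> bool" where
  "complement_in N P H \<longleftrightarrow> H \<subseteq> N \<and> is_map_group H \<and>
     N = {p \<circ> k | p k. p \<in> P \<and> k \<in> H} \<and> P \<inter> H = {id}"

end

theory Submission
  imports Defs
begin


lemma scaleR_cvec: "(r::real) *\<^sub>R (x::complex^'n) = complex_of_real r *s x"
  unfolding vec_eq_iff vector_scaleR_component vector_smult_component by (simp add: scaleR_conv_of_real)

locale hf =
  fixes B :: "complex ^ 'n::finite \<Rightarrow> complex ^ 'n \<Rightarrow> complex"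
  assumes form: "herm_form B"
begin

lemma add_l: "B (x + y) z = B x z + B y z" using form unfolding herm_form_def by blast
lemma scale_l: "B (c *s x) y = c * B x y" using form unfolding herm_form_def by blast
lemma hsym: "B y x = cnj (B x y)" using form unfolding herm_form_def by blast
lemma pos: "x \<noteq> 0 \<Longrightarrow> Re (B x x) > 0" using form unfolding herm_form_def by blast
lemma add_r: "B x (y + z) = B x y + B x z"
  using hsym[of x "y+z"] hsym[of x y] hsym[of x z] add_l[of y z x] by simp
lemma scale_r: "B x (c *s y) = cnj c * B x y"
  using hsym[of x "c *s y"] hsym[of x y] scale_l[of c y x] by simp
lemma zero_l[simp]: "B 0 y = 0" using scale_l[of 0 0 y] by simp
lemma zero_r[simp]: "B y 0 = 0" using scale_r[of y 0 0] by simp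
lemma neg_l: "B (- x) y = - B x y" using scale_l[of "-1" x y] by simp
lemma neg_r: "B x (- y) = - B x y" using scale_r[of x "-1" y] by simp
lemma diff_l: "B (x - y) z = B x z - B y z" using add_l[of x "-y" z] neg_l by simp
lemma diff_r: "B x (y - z) = B x y - B x z" using add_r[of x y "-z"] neg_r by simp
lemma sum_l: "B (sum f S) y = (\<Sum>i\<in>S. B (f i) y)"
  by (induction S rule: infinite_finite_induct) (auto simp: add_l)
lemma sum_r: "B y (sum f S) = (\<Sum>i\<in>S. B y (f i))"
  by (induction S rule: infinite_finite_induct) (auto simp: add_r)
lemma scaleR_l: "B (r *\<^sub>R x) y = of_real r * B x y" by (simp add: scaleR_cvec scale_l)
lemma scaleR_r: "B x (r *\<^sub>R y) = of_real r * B x y" by (simp add: scaleR_cvec scale_r)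
lemma cnj_swap: "cnj (B x y) = B y x" using hsym[of y x] by simp
lemma self_real: "B x x \<in> \<real>" using cnj_swap[of x x] by (simp add: Reals_cnj_iff)
lemma self_cnj: "cnj (B x x) = B x x" using cnj_swap by simp
lemma self_eq: "B x x = of_real (Re (B x x))" using self_real by (simp add: complex_is_Real_iff complex_eq_iff)
lemma self_nz: "x \<noteq> 0 \<Longrightarrow> B x x \<noteq> 0" using pos by fastforce
lemma self_zero_iff: "B x x = 0 \<longleftrightarrow> x = 0" using self_nz by auto

lemma sum_sum: "B (\<Sum>i\<in>I. c i *\<^sub>R x i) (\<Sum>j\<in>J. e j *\<^sub>R y j) = (\<Sum>i\<in>I. \<Sum>j\<in>J. of_real (c i * e j) * B (x i) (y j))"
  by (simp only: sum_l scaleR_l) (simp add: sum_r scaleR_r sum_distrib_left mult_ac)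

end

lemma clinear_add: "clinear g \<Longrightarrow> g (x + y) = g x + g y"
  unfolding clinear_def by (rule vec.linear_add)
lemma clinear_scale: "clinear g \<Longrightarrow> g (c *s x) = c *s g x"
  unfolding clinear_def by (rule vec.linear_scale)
lemma clinear_scaleR: "clinear g \<Longrightarrow> g (r *\<^sub>R x) = r *\<^sub>R g x"
  by (simp add: scaleR_cvec clinear_scale)
lemma clinear_0: "clinear g \<Longrightarrow> g 0 = 0"
  unfolding clinear_def by (rule vec.linear_0)
lemma clinear_neg: "clinear g \<Longrightarrow> g (- x) = - g x"
  unfolding clinear_def by (rule vec.linear_neg)
lemma clinear_diff: "clinear g \<Longrightarrow> g (x - y) = g x - g y"
  unfolding clinear_def by (rule vec.linear_diff)
lemma clinear_sum: "clinear g \<Longrightarrow> g (sum f S) = (\<Sum>i\<in>S. g (f i))"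
  unfolding clinear_def by (rule vec.linear_sum)
lemma clinear_comp: "clinear f \<Longrightarrow> clinear g \<Longrightarrow> clinear (f \<circ> g)"
  unfolding clinear_def using Vector_Spaces.linear_compose by blast
lemma clinearI: "(\<And>x y. g (x + y) = g x + g y) \<Longrightarrow> (\<And>c x. g (c *s x) = c *s g x) \<Longrightarrow> clinear g"
  unfolding clinear_def by (simp add: Vector_Spaces.linear_iff vec.vector_space_axioms)
lemma clinear_id: "clinear id"
  by (rule clinearI) auto

context hf begin

abbreviation R where "R a \<equiv> refl B a (-1)"

lemma R_eq: "R a v = v - (2 * B v a / B a a) *s a"
  by (simp add: refl_def)

lemma refl_clinear: "clinear (refl B a z)"
  by (rule clinearI) (auto simp: refl_def add_l scale_l vec_eq_iff algebra_simps add_divide_distrib diff_divide_distrib)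

lemma R_self: "a \<noteq> 0 \<Longrightarrow> R a a = - a"
  using self_nz[of a] by (simp add: R_eq vec_eq_iff)

lemma R_R: "a \<noteq> 0 \<Longrightarrow> R a (R a v) = v"
proof -
  assume a: "a \<noteq> 0"
  have "R a (R a v) = R a v - (2 * B v a / B a a) *s R a a"
    using refl_clinear[of a "-1"] by (simp add: R_eq[of a v] clinear_diff clinear_scale)
  also have "\<dots> = v" using a by (simp add: R_self R_eq vec_eq_iff)
  finally show ?thesis .
qed

lemma R_comp_R: "a \<noteq> 0 \<Longrightarrow> R a \<circ> R a = id"
  using R_R by auto

lemma R_inv: "a \<noteq> 0 \<Longrightarrow> Hilbert_Choice.inv (R a) = R a"
  using R_comp_R inv_unique_comp by blast

lemma R_bij: "a \<noteq> 0 \<Longrightarrow> bij (R a)"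
  using R_comp_R o_bij by blast

lemma R_neg: "R (- a) = R a"
  by (rule ext) (simp add: R_eq neg_l neg_r vec_eq_iff)

lemma R_form: "a \<noteq> 0 \<Longrightarrow> B (R a u) (R a v) = B u v"
proof -
  assume a: "a \<noteq> 0"
  have aa: "B a a \<noteq> 0" using a self_nz by auto
  have "B (R a u) (R a v) = B u v - cnj (2 * B v a / B a a) * B u a - (2 * B u a / B a a) * B a v
        + (2 * B u a / B a a) * cnj (2 * B v a / B a a) * B a a"
    by (simp add: R_eq diff_l diff_r scale_l scale_r algebra_simps)
  also have "cnj (2 * B v a / B a a) = 2 * B a v / B a a"
    by (simp add: self_cnj cnj_swap)
  finally show ?thesis using aa by (simp add: field_simps)
qed

end


definition pos :: "'n::finite cvec set \<Rightarrow> 'n cvec set \<Rightarrow> 'n cvec set" where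
  "pos \<Phi> \<Delta> = {a\<in>\<Phi>. \<exists>c. a = (\<Sum>d\<in>\<Delta>. c d *\<^sub>R d) \<and> (\<forall>d\<in>\<Delta>. 0 \<le> c d)}"

locale rsys = hf B for B :: "complex ^ 'n::finite \<Rightarrow> complex ^ 'n \<Rightarrow> complex" +
  fixes \<Phi> :: "(complex ^ 'n) set"
  assumes finP: "finite \<Phi>" and nz: "0 \<notin> \<Phi>"
    and realP: "\<forall>a\<in>\<Phi>. \<forall>b\<in>\<Phi>. B a b \<in> \<real>"
    and linesP: "\<forall>a\<in>\<Phi>. {x\<in>\<Phi>. \<exists>t::real. x = complex_of_real t *s a} = {a, - a}"
    and closedP: "\<forall>a\<in>\<Phi>. R a ` \<Phi> = \<Phi>"
begin

lemma nzP: "a \<in> \<Phi> \<Longrightarrow> a \<noteq> 0" using nz by auto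

lemma negP: "a \<in> \<Phi> \<Longrightarrow> - a \<in> \<Phi>"
  using linesP by blast

lemma lineP: "a \<in> \<Phi> \<Longrightarrow> b \<in> \<Phi> \<Longrightarrow> b = t *\<^sub>R a \<Longrightarrow> b = a \<or> b = - a"
proof -
  assume a: "a \<in> \<Phi>" and b: "b \<in> \<Phi>" and bt: "b = t *\<^sub>R a"
  have "b \<in> {x\<in>\<Phi>. \<exists>t::real. x = complex_of_real t *s a}" using b bt by (auto simp: scaleR_cvec)
  then show ?thesis using linesP a by blast
qed

lemma RP: "a \<in> \<Phi> \<Longrightarrow> b \<in> \<Phi> \<Longrightarrow> R a b \<in> \<Phi>"
  using closedP by blast

lemma realv: "a \<in> \<Phi> \<Longrightarrow> b \<in> \<Phi> \<Longrightarrow> B a b = of_real (Re (B a b))"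
  using realP by (simp add: complex_is_Real_iff complex_eq_iff)

lemma Bpos: "a \<in> \<Phi> \<Longrightarrow> Re (B a a) > 0"
  using pos nzP by blast

definition cR :: "'n cvec \<Rightarrow> 'n cvec \<Rightarrow> real" where
  "cR x a = 2 * Re (B x a) / Re (B a a)"

lemma R_real: "a \<in> \<Phi> \<Longrightarrow> x \<in> \<Phi> \<Longrightarrow> R a x = x - cR x a *\<^sub>R a"
proof -
  assume a: "a \<in> \<Phi>" and x: "x \<in> \<Phi>"
  have "2 * B x a / B a a = complex_of_real (cR x a)"
    using realv[OF x a] realv[OF a a] by (simp add: cR_def)
  then show ?thesis by (simp add: R_eq scaleR_cvec)
qed

lemma R_inj: "a \<in> \<Phi> \<Longrightarrow> inj (R a)"
  using R_bij nzP bij_is_inj by blast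

context
  fixes \<Delta> assumes SS: "simple_system \<Phi> \<Delta>"
begin

lemma ss_sub: "\<Delta> \<subseteq> \<Phi>" and ss_fin: "finite \<Delta>" and ss_indep: "independent \<Delta>"
  and ss_span: "span \<Delta> = span \<Phi>"
  and ss_rep: "a \<in> \<Phi> \<Longrightarrow> \<exists>c. a = (\<Sum>d\<in>\<Delta>. c d *\<^sub>R d) \<and> ((\<forall>d\<in>\<Delta>. 0 \<le> c d) \<or> (\<forall>d\<in>\<Delta>. c d \<le> 0))"
  using SS unfolding simple_system_def by auto

lemma uniq0: "(\<Sum>d\<in>\<Delta>. c d *\<^sub>R d) = 0 \<Longrightarrow> d \<in> \<Delta> \<Longrightarrow> c d = 0"
  using ss_indep dependent_finite[OF ss_fin] by blast

lemma uniq: "(\<Sum>d\<in>\<Delta>. c d *\<^sub>R d) = (\<Sum>d\<in>\<Delta>. c' d *\<^sub>R d) \<Longrightarrow> d \<in> \<Delta> \<Longrightarrow> c d = c' d"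
proof -
  assume e: "(\<Sum>d\<in>\<Delta>. c d *\<^sub>R d) = (\<Sum>d\<in>\<Delta>. c' d *\<^sub>R d)" and d: "d \<in> \<Delta>"
  have "(\<Sum>d\<in>\<Delta>. (c d - c' d) *\<^sub>R d) = 0"
    using e by (simp add: scaleR_left_diff_distrib sum_subtractf)
  then show ?thesis using uniq0[of "\<lambda>d. c d - c' d"] d by simp
qed

lemma pos_sub: "pos \<Phi> \<Delta> \<subseteq> \<Phi>" by (auto simp: pos_def)

lemma pos_or_neg: "a \<in> \<Phi> \<Longrightarrow> a \<in> pos \<Phi> \<Delta> \<or> - a \<in> pos \<Phi> \<Delta>"
proof -
  assume a: "a \<in> \<Phi>"
  obtain c where c: "a = (\<Sum>d\<in>\<Delta>. c d *\<^sub>R d)" "(\<forall>d\<in>\<Delta>. 0 \<le> c d) \<or> (\<forall>d\<in>\<Delta>. c d \<le> 0)"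
    using ss_rep[OF a] by blast
  show ?thesis
  proof (cases "\<forall>d\<in>\<Delta>. 0 \<le> c d")
    case True then show ?thesis using a c by (auto simp: pos_def)
  next
    case False
    then have "\<forall>d\<in>\<Delta>. 0 \<le> - c d" using c by auto
    moreover have "- a = (\<Sum>d\<in>\<Delta>. (- c d) *\<^sub>R d)" using c by (simp add: sum_negf)
    ultimately have "\<exists>c'. - a = (\<Sum>d\<in>\<Delta>. c' d *\<^sub>R d) \<and> (\<forall>d\<in>\<Delta>. 0 \<le> c' d)"
      by (intro exI[of _ "\<lambda>d. - c d"]) simp
    then show ?thesis using negP[OF a] unfolding pos_def by blast
  qed
qed

lemma not_both: "a \<in> pos \<Phi> \<Delta> \<Longrightarrow> - a \<notin> pos \<Phi> \<Delta>"
proof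
  assume a: "a \<in> pos \<Phi> \<Delta>" and na: "- a \<in> pos \<Phi> \<Delta>"
  obtain c where c: "a = (\<Sum>d\<in>\<Delta>. c d *\<^sub>R d)" "\<forall>d\<in>\<Delta>. 0 \<le> c d" "a \<in> \<Phi>"
    using a by (auto simp: pos_def)
  obtain c' where c': "- a = (\<Sum>d\<in>\<Delta>. c' d *\<^sub>R d)" "\<forall>d\<in>\<Delta>. 0 \<le> c' d"
    using na by (auto simp: pos_def)
  have "(\<Sum>d\<in>\<Delta>. c d *\<^sub>R d) = (\<Sum>d\<in>\<Delta>. (- c' d) *\<^sub>R d)"
    using c c' by (simp add: sum_negf) (metis add.inverse_inverse)
  then have "\<forall>d\<in>\<Delta>. c d = - c' d" using uniq[of c "\<lambda>d. - c' d"] by blast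
  then have "\<forall>d\<in>\<Delta>. c d = 0" using c c' by force
  then have "a = 0" using c by simp
  then show False using c nz by auto
qed

lemma pos_crit: "a \<in> \<Phi> \<Longrightarrow> a = (\<Sum>d\<in>\<Delta>. c d *\<^sub>R d) \<Longrightarrow> d0 \<in> \<Delta> \<Longrightarrow> c d0 > 0 \<Longrightarrow> a \<in> pos \<Phi> \<Delta>"
proof (rule ccontr)
  assume a: "a \<in> \<Phi>" and c: "a = (\<Sum>d\<in>\<Delta>. c d *\<^sub>R d)" and d0: "d0 \<in> \<Delta>" "c d0 > 0"
    and n: "a \<notin> pos \<Phi> \<Delta>"
  then have "- a \<in> pos \<Phi> \<Delta>" using pos_or_neg by blast
  then obtain c' where c': "- a = (\<Sum>d\<in>\<Delta>. c' d *\<^sub>R d)" "\<forall>d\<in>\<Delta>. 0 \<le> c' d"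
    by (auto simp: pos_def)
  have "(\<Sum>d\<in>\<Delta>. c d *\<^sub>R d) = (\<Sum>d\<in>\<Delta>. (- c' d) *\<^sub>R d)"
    using c c' by (simp add: sum_negf) (metis add.inverse_inverse)
  then have "c d0 = - c' d0" using uniq[of c "\<lambda>d. - c' d"] d0 by blast
  then show False using d0 c' by force
qed

lemma sum_delta_R: "d \<in> \<Delta> \<Longrightarrow> (\<Sum>x\<in>\<Delta>. (if x = d then t else 0) *\<^sub>R x) = t *\<^sub>R d"
proof -
  assume d: "d \<in> \<Delta>"
  have "(\<Sum>x\<in>\<Delta>. (if x = d then t else 0) *\<^sub>R x) = (\<Sum>x\<in>\<Delta>. (if x = d then t *\<^sub>R x else 0))"
    by (rule sum.cong) auto
  also have "\<dots> = t *\<^sub>R d" using d ss_fin by (simp add: sum.delta)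
  finally show ?thesis .
qed

lemma simple_pos: "d \<in> \<Delta> \<Longrightarrow> d \<in> pos \<Phi> \<Delta>"
proof -
  assume d: "d \<in> \<Delta>"
  have "d = (\<Sum>x\<in>\<Delta>. (if x = d then 1 else 0) *\<^sub>R x)" using sum_delta_R[OF d, of 1] by simp
  then show ?thesis unfolding pos_def using d ss_sub
    by (intro CollectI conjI) (blast, rule exI[of _ "\<lambda>x. if x = d then 1 else 0"], auto)
qed

lemma R_pos: "d \<in> \<Delta> \<Longrightarrow> a \<in> pos \<Phi> \<Delta> \<Longrightarrow> a \<noteq> d \<Longrightarrow> R d a \<in> pos \<Phi> \<Delta>"
proof -
  assume d: "d \<in> \<Delta>" and a: "a \<in> pos \<Phi> \<Delta>" and ad: "a \<noteq> d"
  obtain c where c: "a = (\<Sum>x\<in>\<Delta>. c x *\<^sub>R x)" "\<forall>x\<in>\<Delta>. 0 \<le> c x" and aP: "a \<in> \<Phi>"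
    using a by (auto simp: pos_def)
  have dP: "d \<in> \<Phi>" using d ss_sub by auto
  show ?thesis
  proof (cases "\<forall>x\<in>\<Delta>-{d}. c x = 0")
    case True
    have "a = c d *\<^sub>R d + (\<Sum>x\<in>\<Delta>-{d}. c x *\<^sub>R x)"
      using c(1) sum.remove[OF ss_fin d] by simp
    also have "(\<Sum>x\<in>\<Delta>-{d}. c x *\<^sub>R x) = 0" using True by simp
    finally have "a = c d *\<^sub>R d" by simp
    then have "a = d \<or> a = - d" using lineP[OF dP aP] by blast
    then have "a = - d" using ad by blast
    then show ?thesis using a not_both[OF simple_pos[OF d]] by simp
  next
    case False
    then obtain x0 where x0: "x0 \<in> \<Delta>" "x0 \<noteq> d" "c x0 \<noteq> 0" by blast
    then have cx0: "c x0 > 0" using c(2) by force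
    define t where "t = cR a d"
    define c' where "c' x = c x - (if x = d then t else 0)" for x
    have "R d a = a - t *\<^sub>R d" using R_real[OF dP aP] by (simp add: t_def)
    also have "\<dots> = (\<Sum>x\<in>\<Delta>. c' x *\<^sub>R x)"
      using c(1) sum_delta_R[OF d, of t]
      by (simp add: c'_def scaleR_left_diff_distrib sum_subtractf)
    finally have e: "R d a = (\<Sum>x\<in>\<Delta>. c' x *\<^sub>R x)" .
    have "c' x0 > 0" using cx0 x0 by (simp add: c'_def)
    then show ?thesis using pos_crit[OF RP[OF dP aP] e x0(1)] by blast
  qed
qed

end
end


lemma gen_by_comp: "g \<in> gen_by S \<Longrightarrow> h \<in> gen_by S \<Longrightarrow> g \<circ> h \<in> gen_by S"
  by (induction g rule: gen_by.induct) (auto simp: comp_assoc intro: gen_by.intros)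

lemma gen_by_gen: "s \<in> S \<Longrightarrow> s \<in> gen_by S"
  using gen_by.gen_mult[OF _ gen_by.gen_id, of s S] by simp

lemma lincomb_comp:
  fixes D D' :: "'a::real_vector set"
  assumes "\<forall>e\<in>D'. e = (\<Sum>x\<in>D. M e x *\<^sub>R x)"
  shows "(\<Sum>e\<in>D'. c e *\<^sub>R e) = (\<Sum>x\<in>D. (\<Sum>e\<in>D'. c e * M e x) *\<^sub>R x)"
proof -
  have "(\<Sum>e\<in>D'. c e *\<^sub>R e) = (\<Sum>e\<in>D'. c e *\<^sub>R (\<Sum>x\<in>D. M e x *\<^sub>R x))"
    using assms by (intro sum.cong) auto
  also have "\<dots> = (\<Sum>e\<in>D'. \<Sum>x\<in>D. (c e * M e x) *\<^sub>R x)"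
    by (simp add: scaleR_sum_right)
  also have "\<dots> = (\<Sum>x\<in>D. \<Sum>e\<in>D'. (c e * M e x) *\<^sub>R x)"
    by (rule sum.swap)
  also have "\<dots> = (\<Sum>x\<in>D. (\<Sum>e\<in>D'. c e * M e x) *\<^sub>R x)"
    by (simp add: scaleR_sum_left)
  finally show ?thesis .
qed

context rsys begin

lemma rel_iff:
  assumes Bp: "\<forall>a\<in>\<Phi>. \<forall>b\<in>\<Phi>. B (\<psi> a) (\<psi> b) = B a b"
    and xs: "x ` I \<subseteq> \<Phi>" and ys: "y ` J \<subseteq> \<Phi>"
  shows "(\<Sum>i\<in>I. c i *\<^sub>R \<psi> (x i)) = (\<Sum>j\<in>J. e j *\<^sub>R \<psi> (y j))
     \<longleftrightarrow> (\<Sum>i\<in>I. c i *\<^sub>R x i) = (\<Sum>j\<in>J. e j *\<^sub>R y j)"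
proof -
  define v where "v = (\<Sum>i\<in>I. c i *\<^sub>R \<psi> (x i)) - (\<Sum>j\<in>J. e j *\<^sub>R \<psi> (y j))"
  define u where "u = (\<Sum>i\<in>I. c i *\<^sub>R x i) - (\<Sum>j\<in>J. e j *\<^sub>R y j)"
  have e1: "B (\<Sum>i\<in>I. c i *\<^sub>R \<psi> (x i)) (\<Sum>i\<in>I. c i *\<^sub>R \<psi> (x i)) = B (\<Sum>i\<in>I. c i *\<^sub>R x i) (\<Sum>i\<in>I. c i *\<^sub>R x i)"
    unfolding sum_sum using Bp xs by (intro sum.cong refl) (auto simp: image_subset_iff)
  have e2: "B (\<Sum>i\<in>I. c i *\<^sub>R \<psi> (x i)) (\<Sum>j\<in>J. e j *\<^sub>R \<psi> (y j)) = B (\<Sum>i\<in>I. c i *\<^sub>R x i) (\<Sum>j\<in>J. e j *\<^sub>R y j)"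
    unfolding sum_sum using Bp xs ys by (intro sum.cong refl) (auto simp: image_subset_iff)
  have e3: "B (\<Sum>j\<in>J. e j *\<^sub>R \<psi> (y j)) (\<Sum>i\<in>I. c i *\<^sub>R \<psi> (x i)) = B (\<Sum>j\<in>J. e j *\<^sub>R y j) (\<Sum>i\<in>I. c i *\<^sub>R x i)"
    unfolding sum_sum using Bp xs ys by (intro sum.cong refl) (auto simp: image_subset_iff)
  have e4: "B (\<Sum>j\<in>J. e j *\<^sub>R \<psi> (y j)) (\<Sum>j\<in>J. e j *\<^sub>R \<psi> (y j)) = B (\<Sum>j\<in>J. e j *\<^sub>R y j) (\<Sum>j\<in>J. e j *\<^sub>R y j)"
    unfolding sum_sum using Bp ys by (intro sum.cong refl) (auto simp: image_subset_iff)
  have "B v v = B u u"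
    unfolding u_def v_def diff_l diff_r e1 e2 e3 e4 ..
  then have "v = 0 \<longleftrightarrow> u = 0" using self_zero_iff by metis
  then show ?thesis unfolding u_def v_def by simp
qed

lemma rel_single:
  assumes Bp: "\<forall>a\<in>\<Phi>. \<forall>b\<in>\<Phi>. B (\<psi> a) (\<psi> b) = B a b"
    and a: "a \<in> \<Phi>" and ys: "y ` J \<subseteq> \<Phi>"
  shows "\<psi> a = (\<Sum>j\<in>J. e j *\<^sub>R \<psi> (y j)) \<longleftrightarrow> a = (\<Sum>j\<in>J. e j *\<^sub>R y j)"
  using rel_iff[OF Bp, of id "{a}" y J "\<lambda>_. 1" e] a ys by simp

lemma iso_inj:
  assumes Bp: "\<forall>a\<in>\<Phi>. \<forall>b\<in>\<Phi>. B (\<psi> a) (\<psi> b) = B a b"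
  shows "inj_on \<psi> \<Phi>"
proof
  fix a b assume a: "a \<in> \<Phi>" and b: "b \<in> \<Phi>" and e: "\<psi> a = \<psi> b"
  have "\<psi> a = (\<Sum>j\<in>{b}. 1 *\<^sub>R \<psi> (id j))" using e by simp
  then have "a = (\<Sum>j\<in>{b}. 1 *\<^sub>R id j)" using rel_single[OF Bp a, of id "{b}" "\<lambda>_. 1"] b by simp
  then show "a = b" by simp
qed

lemma iso_onto:
  assumes Bp: "\<forall>a\<in>\<Phi>. \<forall>b\<in>\<Phi>. B (\<psi> a) (\<psi> b) = B a b" and into: "\<psi> ` \<Phi> \<subseteq> \<Phi>"
  shows "\<psi> ` \<Phi> = \<Phi>"
  using endo_inj_surj[OF finP into iso_inj[OF Bp]] .

context
  fixes \<Delta> \<psi>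
  assumes SS: "simple_system \<Phi> \<Delta>"
    and Bp: "\<forall>a\<in>\<Phi>. \<forall>b\<in>\<Phi>. B (\<psi> a) (\<psi> b) = B a b" and into: "\<psi> ` \<Phi> \<subseteq> \<Phi>"
begin

lemma injD: "inj_on \<psi> \<Delta>"
  using iso_inj[OF Bp] ss_sub[OF SS] inj_on_subset by blast

lemma reidx: "(\<Sum>d\<in>\<Delta>. c d *\<^sub>R \<psi> d) = (\<Sum>y\<in>\<psi> ` \<Delta>. c (inv_into \<Delta> \<psi> y) *\<^sub>R y)"
  using injD by (simp add: sum.reindex)

lemma reidx2: "(\<Sum>y\<in>\<psi> ` \<Delta>. u y *\<^sub>R y) = (\<Sum>d\<in>\<Delta>. u (\<psi> d) *\<^sub>R \<psi> d)"
  using injD by (simp add: sum.reindex)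

lemma psi_lin: "a \<in> \<Phi> \<Longrightarrow> a = (\<Sum>d\<in>\<Delta>. c d *\<^sub>R d) \<Longrightarrow> \<psi> a = (\<Sum>d\<in>\<Delta>. c d *\<^sub>R \<psi> d)"
  using rel_single[OF Bp, of a id \<Delta> c] ss_sub[OF SS] by simp

lemma iso_ss: "simple_system \<Phi> (\<psi> ` \<Delta>)"
proof -
  have onto: "\<psi> ` \<Phi> = \<Phi>" by (rule iso_onto[OF Bp into])
  have sub: "\<psi> ` \<Delta> \<subseteq> \<Phi>" using into ss_sub[OF SS] by auto
  have fin: "finite (\<psi> ` \<Delta>)" using ss_fin[OF SS] by simp
  have ind: "independent (\<psi> ` \<Delta>)"
  proof
    assume "dependent (\<psi> ` \<Delta>)"
    then obtain u where u: "\<exists>v\<in>\<psi> ` \<Delta>. u v \<noteq> 0" "(\<Sum>v\<in>\<psi> ` \<Delta>. u v *\<^sub>R v) = 0"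
      using dependent_finite[OF fin] by blast
    have "(\<Sum>d\<in>\<Delta>. u (\<psi> d) *\<^sub>R \<psi> (id d)) = (\<Sum>j\<in>{}. u j *\<^sub>R \<psi> (id j))"
      using u(2) reidx2 by simp
    then have "(\<Sum>d\<in>\<Delta>. u (\<psi> d) *\<^sub>R id d) = (\<Sum>j\<in>{}. u j *\<^sub>R id j)"
      using rel_iff[OF Bp, of id \<Delta> id "{}" "\<lambda>d. u (\<psi> d)" u] ss_sub[OF SS] by simp
    then have "\<forall>d\<in>\<Delta>. u (\<psi> d) = 0" using uniq0[OF SS, of "\<lambda>d. u (\<psi> d)"] by simp
    then show False using u(1) by auto
  qed
  have PhiS: "\<Phi> \<subseteq> span (\<psi> ` \<Delta>)"
  proof
    fix b assume "b \<in> \<Phi>"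
    then obtain a where a: "a \<in> \<Phi>" "b = \<psi> a" using onto by auto
    obtain c where c: "a = (\<Sum>d\<in>\<Delta>. c d *\<^sub>R d)" using ss_rep[OF SS a(1)] by blast
    have "b = (\<Sum>d\<in>\<Delta>. c d *\<^sub>R \<psi> d)" using psi_lin[OF a(1) c] a by simp
    then show "b \<in> span (\<psi> ` \<Delta>)"
      by (simp add: span_sum span_scale span_base)
  qed
  have sp: "span (\<psi> ` \<Delta>) = span \<Phi>"
  proof
    show "span (\<psi> ` \<Delta>) \<subseteq> span \<Phi>" using sub span_mono by blast
    show "span \<Phi> \<subseteq> span (\<psi> ` \<Delta>)" using span_mono[OF PhiS] span_span by blast
  qed
  have rep: "\<forall>b\<in>\<Phi>. \<exists>c. b = (\<Sum>d\<in>\<psi> ` \<Delta>. c d *\<^sub>R d) \<and> ((\<forall>d\<in>\<psi> ` \<Delta>. 0 \<le> c d) \<or> (\<forall>d\<in>\<psi> ` \<Delta>. c d \<le> 0))"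
  proof
    fix b assume "b \<in> \<Phi>"
    then obtain a where a: "a \<in> \<Phi>" "b = \<psi> a" using onto by auto
    obtain c where c: "a = (\<Sum>d\<in>\<Delta>. c d *\<^sub>R d)" "(\<forall>d\<in>\<Delta>. 0 \<le> c d) \<or> (\<forall>d\<in>\<Delta>. c d \<le> 0)"
      using ss_rep[OF SS a(1)] by blast
    have "b = (\<Sum>y\<in>\<psi> ` \<Delta>. c (inv_into \<Delta> \<psi> y) *\<^sub>R y)" using psi_lin[OF a(1) c(1)] a reidx by simp
    moreover have "(\<forall>y\<in>\<psi> ` \<Delta>. 0 \<le> c (inv_into \<Delta> \<psi> y)) \<or> (\<forall>y\<in>\<psi> ` \<Delta>. c (inv_into \<Delta> \<psi> y) \<le> 0)"
      using c(2) injD by (auto simp: inv_into_f_f)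
    ultimately show "\<exists>c. b = (\<Sum>d\<in>\<psi> ` \<Delta>. c d *\<^sub>R d) \<and> ((\<forall>d\<in>\<psi> ` \<Delta>. 0 \<le> c d) \<or> (\<forall>d\<in>\<psi> ` \<Delta>. c d \<le> 0))"
      by (intro exI[of _ "\<lambda>y. c (inv_into \<Delta> \<psi> y)"]) blast
  qed
  show ?thesis unfolding simple_system_def using sub fin ind sp rep by blast
qed

lemma iso_pos: "pos \<Phi> (\<psi> ` \<Delta>) = \<psi> ` pos \<Phi> \<Delta>"
proof
  show "\<psi> ` pos \<Phi> \<Delta> \<subseteq> pos \<Phi> (\<psi> ` \<Delta>)"
  proof
    fix b assume "b \<in> \<psi> ` pos \<Phi> \<Delta>"
    then obtain a c where a: "a \<in> \<Phi>" "b = \<psi> a" "a = (\<Sum>d\<in>\<Delta>. c d *\<^sub>R d)" "\<forall>d\<in>\<Delta>. 0 \<le> c d"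
      by (auto simp: pos_def)
    have "b = (\<Sum>y\<in>\<psi> ` \<Delta>. c (inv_into \<Delta> \<psi> y) *\<^sub>R y)" using psi_lin[OF a(1) a(3)] a reidx by simp
    moreover have "\<forall>y\<in>\<psi> ` \<Delta>. 0 \<le> c (inv_into \<Delta> \<psi> y)"
      using a(4) injD by (auto simp: inv_into_f_f)
    ultimately have "\<exists>c'. b = (\<Sum>y\<in>\<psi> ` \<Delta>. c' y *\<^sub>R y) \<and> (\<forall>y\<in>\<psi> ` \<Delta>. 0 \<le> c' y)"
      by (intro exI[of _ "\<lambda>y. c (inv_into \<Delta> \<psi> y)"]) blast
    moreover have "b \<in> \<Phi>" using a into by auto
    ultimately show "b \<in> pos \<Phi> (\<psi> ` \<Delta>)" unfolding pos_def by blast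
  qed
  show "pos \<Phi> (\<psi> ` \<Delta>) \<subseteq> \<psi> ` pos \<Phi> \<Delta>"
  proof
    fix b assume b: "b \<in> pos \<Phi> (\<psi> ` \<Delta>)"
    then obtain e where e: "b \<in> \<Phi>" "b = (\<Sum>y\<in>\<psi> ` \<Delta>. e y *\<^sub>R y)" "\<forall>y\<in>\<psi> ` \<Delta>. 0 \<le> e y"
      by (auto simp: pos_def)
    obtain a where a: "a \<in> \<Phi>" "b = \<psi> a" using e(1) iso_onto[OF Bp into] by auto
    have "\<psi> a = (\<Sum>d\<in>\<Delta>. e (\<psi> d) *\<^sub>R \<psi> (id d))" using e(2) a reidx2 by simp
    then have "a = (\<Sum>d\<in>\<Delta>. e (\<psi> d) *\<^sub>R id d)"
      using rel_single[OF Bp a(1), of id \<Delta> "\<lambda>d. e (\<psi> d)"] ss_sub[OF SS] by simp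
    then have "a \<in> pos \<Phi> \<Delta>" using a(1) e(3) unfolding pos_def by auto
    then show "b \<in> \<psi> ` pos \<Phi> \<Delta>" using a by auto
  qed
qed

end

end


context rsys begin

lemma pos_fin: "finite (pos \<Phi> D)"
  using finP by (rule finite_subset[rotated]) (auto simp: pos_def)

lemma pos_in: "a \<in> pos \<Phi> D \<Longrightarrow> a \<in> \<Phi>" by (auto simp: pos_def)

lemma choose_rep:
  assumes "D' \<subseteq> pos \<Phi> D"
  obtains M where "\<forall>e\<in>D'. e = (\<Sum>x\<in>D. M e x *\<^sub>R x) \<and> (\<forall>x\<in>D. 0 \<le> M e x)"
proof -
  have "\<forall>e\<in>D'. \<exists>m. e = (\<Sum>x\<in>D. m x *\<^sub>R x) \<and> (\<forall>x\<in>D. 0 \<le> m x)"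
    using assms by (auto simp: pos_def)
  from bchoice[OF this] obtain M where "\<forall>e\<in>D'. e = (\<Sum>x\<in>D. M e x *\<^sub>R x) \<and> (\<forall>x\<in>D. 0 \<le> M e x)"
    by blast
  then show ?thesis using that by blast
qed

lemma pos_mono_simple:
  assumes SS: "simple_system \<Phi> D" and SS': "simple_system \<Phi> D'" and sub: "D' \<subseteq> pos \<Phi> D"
  shows "pos \<Phi> D' \<subseteq> pos \<Phi> D"
proof
  fix a assume a: "a \<in> pos \<Phi> D'"
  then obtain c where c: "a = (\<Sum>e\<in>D'. c e *\<^sub>R e)" "\<forall>e\<in>D'. 0 \<le> c e" "a \<in> \<Phi>"
    by (auto simp: pos_def)
  obtain M where M: "\<forall>e\<in>D'. e = (\<Sum>x\<in>D. M e x *\<^sub>R x) \<and> (\<forall>x\<in>D. 0 \<le> M e x)"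
    using choose_rep[OF sub] by blast
  have "a = (\<Sum>x\<in>D. (\<Sum>e\<in>D'. c e * M e x) *\<^sub>R x)"
    using c(1) lincomb_comp[where D=D and D'=D' and M=M and c=c] M by simp
  moreover have "\<forall>x\<in>D. 0 \<le> (\<Sum>e\<in>D'. c e * M e x)"
    using c(2) M by (auto intro!: sum_nonneg)
  ultimately show "a \<in> pos \<Phi> D" using c(3) unfolding pos_def
    by (intro CollectI conjI exI[of _ "\<lambda>x. \<Sum>e\<in>D'. c e * M e x"]) auto
qed

lemma pos_eq:
  assumes SS: "simple_system \<Phi> D" and SS': "simple_system \<Phi> D'" and sub: "pos \<Phi> D' \<subseteq> pos \<Phi> D"
  shows "pos \<Phi> D' = pos \<Phi> D"
proof
  show "pos \<Phi> D \<subseteq> pos \<Phi> D'"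
  proof
    fix a assume a: "a \<in> pos \<Phi> D"
    then have "a \<in> \<Phi>" by (rule pos_in)
    then have "a \<in> pos \<Phi> D' \<or> - a \<in> pos \<Phi> D'" using pos_or_neg[OF SS'] by blast
    then show "a \<in> pos \<Phi> D'" using sub not_both[OF SS a] by blast
  qed
qed (rule sub)

lemma simple_unique_sub:
  assumes SS: "simple_system \<Phi> D" and SS': "simple_system \<Phi> D'" and eq: "pos \<Phi> D = pos \<Phi> D'"
  shows "D \<subseteq> D'"
proof
  fix d assume d: "d \<in> D"
  have dP: "d \<in> \<Phi>" using d ss_sub[OF SS] by auto
  have "d \<in> pos \<Phi> D'" using simple_pos[OF SS d] eq by simp
  then obtain c where c: "d = (\<Sum>e\<in>D'. c e *\<^sub>R e)" "\<forall>e\<in>D'. 0 \<le> c e"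
    by (auto simp: pos_def)
  have D'sub: "D' \<subseteq> pos \<Phi> D" using simple_pos[OF SS'] eq by blast
  obtain M where M: "\<forall>e\<in>D'. e = (\<Sum>x\<in>D. M e x *\<^sub>R x) \<and> (\<forall>x\<in>D. 0 \<le> M e x)"
    using choose_rep[OF D'sub] by blast
  have e1: "(\<Sum>x\<in>D. (\<Sum>e\<in>D'. c e * M e x) *\<^sub>R x) = (\<Sum>x\<in>D. (if x = d then 1 else 0) *\<^sub>R x)"
    using c(1) lincomb_comp[where D=D and D'=D' and M=M and c=c] M sum_delta_R[OF SS d, of 1] by simp
  have z: "\<forall>x\<in>D-{d}. \<forall>e\<in>D'. c e * M e x = 0"
  proof (intro ballI)
    fix x e assume x: "x \<in> D - {d}" and e: "e \<in> D'"
    have "(\<Sum>e\<in>D'. c e * M e x) = 0" using uniq[OF SS e1, of x] x by simp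
    moreover have "finite D'" using ss_fin[OF SS'] .
    moreover have "\<forall>e\<in>D'. 0 \<le> c e * M e x" using c(2) M x by auto
    ultimately show "c e * M e x = 0" using sum_nonneg_eq_0_iff[of D' "\<lambda>e. c e * M e x"] e by simp
  qed
  obtain e0 where e0: "e0 \<in> D'" "c e0 > 0"
  proof (rule ccontr)
    assume "\<not> thesis"
    have "\<forall>e\<in>D'. c e = 0"
    proof
      fix e assume e: "e \<in> D'"
      have "\<not> c e > 0" using that[OF e] \<open>\<not> thesis\<close> by blast
      then show "c e = 0" using c(2) e by force
    qed
    then have "d = 0" using c(1) by simp
    then show False using dP nz by auto
  qed
  have Mz: "\<forall>x\<in>D-{d}. M e0 x = 0"
  proof
    fix x assume "x \<in> D - {d}"
    then have "c e0 * M e0 x = 0" using z e0 by blast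
    then show "M e0 x = 0" using e0 by simp
  qed
  have e0P: "e0 \<in> \<Phi>" using e0 ss_sub[OF SS'] by auto
  have "e0 = M e0 d *\<^sub>R d + (\<Sum>x\<in>D-{d}. M e0 x *\<^sub>R x)"
    using M e0 sum.remove[OF ss_fin[OF SS] d, of "\<lambda>x. M e0 x *\<^sub>R x"] by auto
  also have "(\<Sum>x\<in>D-{d}. M e0 x *\<^sub>R x) = 0" using Mz by simp
  finally have "e0 = M e0 d *\<^sub>R d" by simp
  then have "e0 = d \<or> e0 = - d" using lineP[OF dP e0P] by blast
  moreover have "e0 \<noteq> - d"
  proof
    assume "e0 = - d"
    then have "- d \<in> pos \<Phi> D" using D'sub e0 by auto
    then show False using not_both[OF SS simple_pos[OF SS d]] by simp
  qed
  ultimately show "d \<in> D'" using e0 by auto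
qed

lemma R_gen: "a \<in> \<Phi> \<Longrightarrow> R a \<in> gen_by (R ` \<Phi>)"
  by (rule gen_by_gen) auto

lemma R_Bp: "a \<in> \<Phi> \<Longrightarrow> \<forall>x\<in>\<Phi>. \<forall>y\<in>\<Phi>. B (R a x) (R a y) = B x y"
  using R_form nzP by blast

lemma R_into: "a \<in> \<Phi> \<Longrightarrow> R a ` \<Phi> \<subseteq> \<Phi>"
  using closedP by blast

lemma transitive_k:
  assumes SS: "simple_system \<Phi> D"
  shows "\<And>D'. simple_system \<Phi> D' \<Longrightarrow> card (pos \<Phi> D' - pos \<Phi> D) = k \<Longrightarrow>
     \<exists>w\<in>gen_by (R ` \<Phi>). w ` D' = D"
proof (induction k)
  case 0
  have "pos \<Phi> D' - pos \<Phi> D = {}" using 0 pos_fin[of D'] by simp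
  then have "pos \<Phi> D' \<subseteq> pos \<Phi> D" by blast
  then have eq: "pos \<Phi> D' = pos \<Phi> D" using pos_eq[OF SS 0(1)] by blast
  have "D' = D" using simple_unique_sub[OF SS 0(1) eq[symmetric]] simple_unique_sub[OF 0(1) SS eq] by blast
  then show ?case by (intro bexI[of _ id]) (auto intro: gen_by.gen_id)
next
  case (Suc k)
  have SS': "simple_system \<Phi> D'" by fact
  have "\<not> D' \<subseteq> pos \<Phi> D"
  proof
    assume "D' \<subseteq> pos \<Phi> D"
    then have "pos \<Phi> D' \<subseteq> pos \<Phi> D" using pos_mono_simple[OF SS SS'] by blast
    then have "pos \<Phi> D' - pos \<Phi> D = {}" by blast
    then have "card (pos \<Phi> D' - pos \<Phi> D) = 0" by (simp only: card.empty)
    then show False using Suc(3) by simp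
  qed
  then obtain d where d: "d \<in> D'" "d \<notin> pos \<Phi> D" by blast
  have dP: "d \<in> \<Phi>" using d ss_sub[OF SS'] by auto
  have dpos': "d \<in> pos \<Phi> D'" using simple_pos[OF SS' d(1)] .
  have mdpos: "- d \<in> pos \<Phi> D" using pos_or_neg[OF SS dP] d by blast
  define D2 where "D2 = R d ` D'"
  have SS2: "simple_system \<Phi> D2" unfolding D2_def by (rule iso_ss[OF SS' R_Bp[OF dP] R_into[OF dP]])
  have pos2: "pos \<Phi> D2 = R d ` pos \<Phi> D'" unfolding D2_def by (rule iso_pos[OF SS' R_Bp[OF dP] R_into[OF dP]])
  have A: "R d ` (pos \<Phi> D' - {d}) \<subseteq> pos \<Phi> D' - {d}"
  proof
    fix y assume "y \<in> R d ` (pos \<Phi> D' - {d})"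
    then obtain a where a: "a \<in> pos \<Phi> D'" "a \<noteq> d" "y = R d a" by auto
    have "y \<in> pos \<Phi> D'" using R_pos[OF SS' d(1) a(1) a(2)] a by simp
    moreover have "y \<noteq> d"
    proof
      assume yd: "y = d"
      have "a = R d (R d a)" using R_R[OF nzP[OF dP], of a] by simp
      also have "\<dots> = R d d" using yd a(3) by simp
      also have "\<dots> = - d" using R_self[OF nzP[OF dP]] .
      finally have "a = - d" .
      then show False using a(1) not_both[OF SS' dpos'] by simp
    qed
    ultimately show "y \<in> pos \<Phi> D' - {d}" by blast
  qed
  have injR: "inj_on (R d) (pos \<Phi> D' - {d})" using R_inj[OF dP] inj_on_subset by blast
  have A2: "R d ` (pos \<Phi> D' - {d}) = pos \<Phi> D' - {d}"
    using endo_inj_surj[OF _ A injR] pos_fin[of D'] by simp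
  have "R d ` pos \<Phi> D' = R d ` (pos \<Phi> D' - {d}) \<union> {R d d}" using dpos' by blast
  then have pos2': "pos \<Phi> D2 = (pos \<Phi> D' - {d}) \<union> {- d}"
    unfolding pos2 A2 R_self[OF nzP[OF dP]] .
  have eqq: "pos \<Phi> D2 - pos \<Phi> D = (pos \<Phi> D' - pos \<Phi> D) - {d}"
    unfolding pos2' using mdpos by auto
  have "card (pos \<Phi> D2 - pos \<Phi> D) = k"
  proof -
    have dd: "d \<in> pos \<Phi> D' - pos \<Phi> D" using dpos' d by blast
    have ff: "finite (pos \<Phi> D' - pos \<Phi> D)" using pos_fin[of D'] by blast
    show ?thesis using card_Diff_singleton[OF dd] Suc(3) eqq by simp
  qed
  then obtain w where w: "w \<in> gen_by (R ` \<Phi>)" "w ` D2 = D" using Suc.IH[OF SS2] by blast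
  have "w \<circ> R d \<in> gen_by (R ` \<Phi>)" using gen_by_comp[OF w(1) R_gen[OF dP]] .
  moreover have "(w \<circ> R d) ` D' = D" using w(2) unfolding D2_def by (simp add: image_comp)
  ultimately show ?case by blast
qed

lemma transitive:
  assumes "simple_system \<Phi> D" "simple_system \<Phi> D'"
  shows "\<exists>w\<in>gen_by (R ` \<Phi>). w ` D' = D"
  using transitive_k[OF assms] by blast

end


context hf begin

lemma R_conj:
  assumes u: "clinear u" and f: "\<forall>x y. B (u x) (u y) = B x y"
  shows "R (u d) (u x) = u (R d x)"
proof -
  have "u (R d x) = u x - (2 * B x d / B d d) *s u d"
    using u by (simp add: R_eq clinear_diff clinear_scale)
  also have "\<dots> = R (u d) (u x)" using f by (simp add: R_eq)
  finally show ?thesis by simp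
qed

end

context rsys begin

definition word :: "'n cvec list \<Rightarrow> 'n cmap" where
  "word ds = foldr (\<lambda>d f. R d \<circ> f) ds id"

lemma word_Nil[simp]: "word [] = id" by (simp add: word_def)
lemma word_Cons[simp]: "word (d # ds) = R d \<circ> word ds" by (simp add: word_def)
lemma word_append: "word (xs @ ys) = word xs \<circ> word ys"
  by (induction xs) (auto simp: comp_assoc)

lemma word_clinear: "clinear (word ds)"
proof (induction ds)
  case Nil show ?case unfolding word_Nil by (rule clinear_id)
next
  case (Cons d ds) show ?case unfolding word_Cons by (rule clinear_comp[OF refl_clinear Cons])
qed

lemma word_form: "set ds \<subseteq> \<Phi> \<Longrightarrow> B (word ds x) (word ds y) = B x y"
  by (induction ds arbitrary: x y) (auto simp: R_form nzP)

lemma word_rev: "set ds \<subseteq> \<Phi> \<Longrightarrow> word ds (word (rev ds) x) = x"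
proof (induction ds arbitrary: x)
  case Nil then show ?case by simp
next
  case (Cons d ds)
  have "word (d # ds) (word (rev (d # ds)) x) = R d (word ds (word (rev ds) (R d x)))"
    by (simp add: word_append)
  also have "\<dots> = R d (R d x)" using Cons by simp
  also have "\<dots> = x" using Cons(2) R_R nzP by simp
  finally show ?case .
qed

lemma word_Phi: "set ds \<subseteq> \<Phi> \<Longrightarrow> a \<in> \<Phi> \<Longrightarrow> word ds a \<in> \<Phi>"
  by (induction ds) (auto simp: RP)

lemma word_gen: "set ds \<subseteq> \<Phi> \<Longrightarrow> word ds \<in> gen_by (R ` \<Phi>)"
proof (induction ds)
  case Nil show ?case unfolding word_Nil by (rule gen_by.gen_id)
next
  case (Cons d ds)
  then show ?case unfolding word_Cons by (intro gen_by.gen_mult) auto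
qed

lemma R_word:
  assumes ds: "set ds \<subseteq> \<Phi>"
  shows "R (word ds d) = word (ds @ [d] @ rev ds)"
proof
  fix v
  have wf: "\<forall>x y. B (word ds x) (word ds y) = B x y" using word_form[OF ds] by blast
  have "R (word ds d) v = R (word ds d) (word ds (word (rev ds) v))" using word_rev[OF ds] by simp
  also have "\<dots> = word ds (R d (word (rev ds) v))" by (rule R_conj[OF word_clinear wf])
  also have "\<dots> = word (ds @ [d] @ rev ds) v" by (simp add: word_append)
  finally show "R (word ds d) v = word (ds @ [d] @ rev ds) v" .
qed

context
  fixes D assumes SS: "simple_system \<Phi> D"
begin

lemma DP: "set ds \<subseteq> D \<Longrightarrow> set ds \<subseteq> \<Phi>" using ss_sub[OF SS] by blast

lemma deletion:
  "set ds \<subseteq> D \<Longrightarrow> d \<in> D \<Longrightarrow> word ds d \<notin> pos \<Phi> D \<Longrightarrow>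
     \<exists>ds'. set ds' \<subseteq> D \<and> length ds' < Suc (length ds) \<and> word (ds @ [d]) = word ds'"
proof (induction ds)
  case Nil
  then show ?case using simple_pos[OF SS] by simp
next
  case (Cons e rest)
  have e: "e \<in> D" and rest: "set rest \<subseteq> D" using Cons(2) by auto
  have eP: "e \<in> \<Phi>" using e ss_sub[OF SS] by auto
  show ?case
  proof (cases "word rest d \<in> pos \<Phi> D")
    case False
    then obtain ds1 where ds1: "set ds1 \<subseteq> D" "length ds1 < Suc (length rest)" "word (rest @ [d]) = word ds1"
      using Cons.IH[OF rest Cons(3)] by blast
    have "word ((e # rest) @ [d]) = word (e # ds1)" using ds1(3) by simp
    then show ?thesis using ds1 e by (intro exI[of _ "e # ds1"]) auto
  next
    case True
    have "word rest d = e"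
    proof (rule ccontr)
      assume "word rest d \<noteq> e"
      then have "R e (word rest d) \<in> pos \<Phi> D" using R_pos[OF SS e True] by blast
      then show False using Cons(4) by simp
    qed
    have restP: "set rest \<subseteq> \<Phi>" using rest ss_sub[OF SS] by auto
    have dP: "d \<in> \<Phi>" using Cons(3) ss_sub[OF SS] by auto
    have wf: "\<forall>x y. B (word rest x) (word rest y) = B x y" using word_form[OF restP] by blast
    have "word ((e # rest) @ [d]) = word rest"
    proof
      fix x
      have "word ((e # rest) @ [d]) x = R (word rest d) (word rest (R d x))"
        using \<open>word rest d = e\<close> by (simp add: word_append)
      also have "\<dots> = word rest (R d (R d x))" by (rule R_conj[OF word_clinear wf])
      also have "\<dots> = word rest x" using R_R[OF nzP[OF dP]] by simp
      finally show "word ((e # rest) @ [d]) x = word rest x" .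
    qed
    then show ?thesis using rest by (intro exI[of _ rest]) auto
  qed
qed

lemma word_fix:
  "set ds \<subseteq> D \<Longrightarrow> word ds ` D = D \<Longrightarrow> word ds = id"
proof (induction "length ds" arbitrary: ds rule: less_induct)
  case less
  show ?case
  proof (cases ds rule: rev_cases)
    case Nil then show ?thesis by simp
  next
    case (snoc ds0 d)
    have ds0: "set ds0 \<subseteq> D" and d: "d \<in> D" using less(2) snoc by auto
    have dP: "d \<in> \<Phi>" using d ss_sub[OF SS] by auto
    show ?thesis
    proof (cases "word ds0 d \<in> pos \<Phi> D")
      case False
      then obtain ds' where ds': "set ds' \<subseteq> D" "length ds' < Suc (length ds0)" "word (ds0 @ [d]) = word ds'"
        using deletion[OF ds0 d] by blast
      have "length ds' < length ds" using ds'(2) snoc by simp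
      moreover have "word ds' ` D = D" using less(3) ds'(3) snoc by simp
      ultimately have "word ds' = id" using less(1) ds'(1) by blast
      then show ?thesis using ds'(3) snoc by simp
    next
      case True
      have "word ds d = word ds0 (R d d)" using snoc by (simp add: word_append)
      also have "\<dots> = - word ds0 d" using R_self[OF nzP[OF dP]] word_clinear clinear_neg by metis
      finally have e: "word ds d = - word ds0 d" .
      have "word ds d \<in> D" using less(3) d by blast
      then have "word ds d \<in> pos \<Phi> D" using simple_pos[OF SS] by blast
      then show ?thesis using e not_both[OF SS True] by simp
    qed
  qed
qed

end
end


definition coef :: "'n::finite cvec set \<Rightarrow> 'n cvec \<Rightarrow> 'n cvec \<Rightarrow> real" where
  "coef D a = (SOME c. a = (\<Sum>d\<in>D. c d *\<^sub>R d))"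

definition ht :: "'n::finite cvec set \<Rightarrow> 'n cvec \<Rightarrow> real" where
  "ht D a = (\<Sum>d\<in>D. coef D a d)"

context rsys begin
context
  fixes D assumes SS: "simple_system \<Phi> D"
begin

lemma ht_eq: "a = (\<Sum>d\<in>D. c d *\<^sub>R d) \<Longrightarrow> ht D a = (\<Sum>d\<in>D. c d)"
proof -
  assume a: "a = (\<Sum>d\<in>D. c d *\<^sub>R d)"
  then have "a = (\<Sum>d\<in>D. coef D a d *\<^sub>R d)" unfolding coef_def
    by (rule someI[where P="\<lambda>c. a = (\<Sum>d\<in>D. c d *\<^sub>R d)"])
  then have "\<forall>d\<in>D. coef D a d = c d" using uniq[OF SS, of "coef D a" c] a by auto
  then show ?thesis unfolding ht_def by simp
qed

lemma pos_word_n: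
  "\<And>a. a \<in> pos \<Phi> D \<Longrightarrow> card {b \<in> pos \<Phi> D. ht D b < ht D a} = n \<Longrightarrow>
     \<exists>ds d. set ds \<subseteq> D \<and> d \<in> D \<and> a = word ds d"
proof (induction n rule: less_induct)
  case (less n a)
  show ?case
  proof (cases "a \<in> D")
    case True
    then show ?thesis by (intro exI[of _ "[]"] exI[of _ a]) simp
  next
    case False
    obtain c where c: "a = (\<Sum>x\<in>D. c x *\<^sub>R x)" "\<forall>x\<in>D. 0 \<le> c x" and aP: "a \<in> \<Phi>"
      using less(2) by (auto simp: pos_def)
    have "B a a = (\<Sum>x\<in>D. of_real (c x) * B x a)"
      by (subst (1) c(1)) (simp add: sum_l scaleR_l)
    then have "Re (B a a) = (\<Sum>x\<in>D. c x * Re (B x a))" by (simp add: Re_sum)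
    then have "(\<Sum>x\<in>D. c x * Re (B x a)) > 0" using Bpos[OF aP] by simp
    moreover have "\<not> (\<forall>x\<in>D. c x * Re (B x a) \<le> 0)"
    proof
      assume "\<forall>x\<in>D. c x * Re (B x a) \<le> 0"
      then have "(\<Sum>x\<in>D. c x * Re (B x a)) \<le> 0" by (intro sum_nonpos) blast
      then show False using \<open>(\<Sum>x\<in>D. c x * Re (B x a)) > 0\<close> by simp
    qed
    then obtain x where x: "x \<in> D" "c x * Re (B x a) > 0" by (auto simp: not_le)
    have Rx: "Re (B x a) > 0"
    proof (rule ccontr)
      assume "\<not> Re (B x a) > 0"
      then have "c x * Re (B x a) \<le> 0" using c(2) x(1) mult_nonneg_nonpos by force
      then show False using x(2) by simp
    qed
    have xP: "x \<in> \<Phi>" using x(1) ss_sub[OF SS] by auto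
    define t where "t = cR a x"
    have "Re (B a x) = Re (B x a)" by (simp add: hsym[of x a])
    then have tpos: "t > 0" using Rx Bpos[OF xP] by (simp add: t_def cR_def)
    define b where "b = R x a"
    have ax: "a \<noteq> x" using False x(1) by blast
    have bpos: "b \<in> pos \<Phi> D" unfolding b_def by (rule R_pos[OF SS x(1) less(2) ax])
    have b1: "b = a - t *\<^sub>R x" unfolding b_def t_def by (rule R_real[OF xP aP])
    have b2: "a - t *\<^sub>R x = (\<Sum>y\<in>D. (c y - (if y = x then t else 0)) *\<^sub>R y)"
      using c(1) sum_delta_R[OF SS x(1), of t]
      by (simp add: scaleR_left_diff_distrib sum_subtractf)
    have h1: "ht D b = (\<Sum>y\<in>D. (c y - (if y = x then t else 0)))" using ht_eq b1 b2 by simp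
    have h2: "(\<Sum>y\<in>D. (c y - (if y = x then t else 0))) = (\<Sum>y\<in>D. c y) - t"
      using x(1) ss_fin[OF SS] by (simp add: sum_subtractf)
    have h3: "(\<Sum>y\<in>D. c y) = ht D a" using ht_eq[OF c(1)] by simp
    have hb: "ht D b < ht D a" using h1 h2 h3 tpos by simp
    have sub: "{y \<in> pos \<Phi> D. ht D y < ht D b} \<subset> {y \<in> pos \<Phi> D. ht D y < ht D a}"
    proof
      show "{y \<in> pos \<Phi> D. ht D y < ht D b} \<subseteq> {y \<in> pos \<Phi> D. ht D y < ht D a}"
        using hb by auto
      have "b \<in> {y \<in> pos \<Phi> D. ht D y < ht D a}" using bpos hb by simp
      moreover have "b \<notin> {y \<in> pos \<Phi> D. ht D y < ht D b}" by simp
      ultimately show "{y \<in> pos \<Phi> D. ht D y < ht D b} \<noteq> {y \<in> pos \<Phi> D. ht D y < ht D a}" by blast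
    qed
    have "finite {y \<in> pos \<Phi> D. ht D y < ht D a}" using pos_fin[of D] by simp
    then have "card {y \<in> pos \<Phi> D. ht D y < ht D b} < n" using psubset_card_mono[OF _ sub] less(3) by simp
    then obtain ds d where dsd: "set ds \<subseteq> D" "d \<in> D" "b = word ds d" using less(1) bpos by blast
    have "a = R x b" unfolding b_def using R_R[OF nzP[OF xP]] by simp
    then have "a = word (x # ds) d" using dsd by simp
    then show ?thesis using dsd x(1) by (intro exI[of _ "x # ds"] exI[of _ d]) simp
  qed
qed

lemma pos_word: "a \<in> pos \<Phi> D \<Longrightarrow> \<exists>ds d. set ds \<subseteq> D \<and> d \<in> D \<and> a = word ds d"
  using pos_word_n[OF _ refl] by blast

lemma R_words: "a \<in> \<Phi> \<Longrightarrow> \<exists>ds. set ds \<subseteq> D \<and> R a = word ds"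
proof -
  assume a: "a \<in> \<Phi>"
  obtain a' where a': "a' \<in> pos \<Phi> D" "R a = R a'"
  proof (cases "a \<in> pos \<Phi> D")
    case True then show ?thesis using that by blast
  next
    case False
    then have "- a \<in> pos \<Phi> D" using pos_or_neg[OF SS a] by blast
    moreover have "R a = R (- a)" by (simp only: R_neg)
    ultimately show ?thesis using that by blast
  qed
  obtain ds d where dsd: "set ds \<subseteq> D" "d \<in> D" "a' = word ds d" using pos_word[OF a'(1)] by blast
  have "R a = word (ds @ [d] @ rev ds)" using a'(2) dsd R_word[OF DP[OF SS dsd(1)]] by simp
  then show ?thesis using dsd by (intro exI[of _ "ds @ [d] @ rev ds"]) auto
qed

lemma gen_words: "g \<in> gen_by (R ` \<Phi>) \<Longrightarrow> \<exists>ds. set ds \<subseteq> D \<and> g = word ds"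
proof (induction g rule: gen_by.induct)
  case gen_id
  then show ?case by (intro exI[of _ "[]"]) simp
next
  case (gen_mult s g)
  then obtain a ds where a: "a \<in> \<Phi>" "s = R a" "set ds \<subseteq> D" "g = word ds" by blast
  obtain ds1 where ds1: "set ds1 \<subseteq> D" "R a = word ds1" using R_words[OF a(1)] by blast
  show ?case using a ds1 by (intro exI[of _ "ds1 @ ds"]) (simp add: word_append)
next
  case (gen_inv s g)
  then obtain a ds where a: "a \<in> \<Phi>" "s = R a" "set ds \<subseteq> D" "g = word ds" by blast
  have si: "Hilbert_Choice.inv s = R a" using a R_inv nzP by simp
  obtain ds1 where ds1: "set ds1 \<subseteq> D" "R a = word ds1" using R_words[OF a(1)] by blast
  show ?case using a ds1 si by (intro exI[of _ "ds1 @ ds"]) (simp add: word_append)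
qed

lemma simple_trans: "p \<in> gen_by (R ` \<Phi>) \<Longrightarrow> p ` D = D \<Longrightarrow> p = id"
proof -
  assume p: "p \<in> gen_by (R ` \<Phi>)" and pD: "p ` D = D"
  obtain ds where ds: "set ds \<subseteq> D" "p = word ds" using gen_words[OF p] by blast
  show "p = id" using word_fix[OF SS ds(1)] pD ds(2) by simp
qed

end
end


lemma real_root_one:
  fixes c :: complex
  assumes "c \<in> \<real>" "c ^ h = 1" "odd h"
  shows "c = 1"
proof -
  obtain r where r: "c = of_real r" using assms(1) by (auto elim: Reals_cases)
  have rh: "r ^ h = 1" using assms(2) r by (metis of_real_eq_1_iff of_real_power)
  have hp: "h > 0" using assms(3) by (cases h) auto
  have "\<bar>r\<bar> ^ h = \<bar>r ^ h\<bar>" by (simp add: power_abs)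
  then have "\<bar>r\<bar> ^ h = 1 ^ h" using rh by simp
  then have "\<bar>r\<bar> = 1" using power_eq_imp_eq_base[of "\<bar>r\<bar>" h 1] hp by simp
  then have "r = 1 \<or> r = -1" by auto
  moreover have "r \<noteq> -1"
  proof
    assume "r = -1"
    then have "r ^ h = -1" using assms(3) by simp
    then show False using rh by simp
  qed
  ultimately show ?thesis using r by simp
qed

lemma gamma_mod:
  fixes g :: complex
  assumes "g ^ h = 1"
  shows "g ^ n = g ^ (n mod h)"
proof -
  have "g ^ n = g ^ (h * (n div h) + n mod h)" by simp
  also have "\<dots> = (g ^ h) ^ (n div h) * g ^ (n mod h)" by (simp only: power_add power_mult)
  finally show ?thesis using assms by simp
qed

lemma gamma_norm:
  fixes g :: complex
  assumes "g ^ h = 1" "h > 0"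
  shows "norm g = 1"
proof -
  have "norm g ^ h = 1 ^ h" using assms(1) by (metis norm_one norm_power power_one)
  then show ?thesis using power_eq_imp_eq_base[of "norm g" h 1] assms(2) by simp
qed

lemma conj_image:
  assumes g: "bij g"
    and a: "\<forall>q\<in>P. g \<circ> q \<circ> Hilbert_Choice.inv g \<in> P"
    and b: "\<forall>q\<in>P. Hilbert_Choice.inv g \<circ> q \<circ> g \<in> P"
  shows "(\<lambda>q. g \<circ> q \<circ> Hilbert_Choice.inv g) ` P = P"
proof
  show "(\<lambda>q. g \<circ> q \<circ> Hilbert_Choice.inv g) ` P \<subseteq> P" using a by blast
  show "P \<subseteq> (\<lambda>q. g \<circ> q \<circ> Hilbert_Choice.inv g) ` P"
  proof
    fix q assume q: "q \<in> P"
    have e1: "g \<circ> Hilbert_Choice.inv g = id" using bij_is_surj[OF g] surj_iff by blast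
    have "g \<circ> (Hilbert_Choice.inv g \<circ> q \<circ> g) \<circ> Hilbert_Choice.inv g = (g \<circ> Hilbert_Choice.inv g) \<circ> q \<circ> (g \<circ> Hilbert_Choice.inv g)"
      by (simp add: comp_assoc)
    also have "\<dots> = q" using e1 by simp
    finally show "q \<in> (\<lambda>q. g \<circ> q \<circ> Hilbert_Choice.inv g) ` P" using b q by (metis image_eqI)
  qed
qed

context hf begin

lemma R_eq_line:
  assumes "a \<noteq> 0" "R a = R b"
  shows "a = (B a b / B b b) *s b"
proof -
  have "R b a = - a" using R_self[OF assms(1)] assms(2) by simp
  then have h: "a - (2 * (B a b / B b b)) *s b = - a" by (simp add: R_eq)
  define q where "q = B a b / B b b"
  have "\<forall>i. a $ i = q * b $ i"
  proof
    fix i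
    have "a $ i - (2 * q) * b $ i = - a $ i" using h unfolding q_def[symmetric]
      by (metis vector_minus_component vector_smult_component vector_uminus_component)
    then have "2 * a $ i = 2 * (q * b $ i)" by (simp add: algebra_simps)
    then show "a $ i = q * b $ i" by simp
  qed
  then show ?thesis unfolding q_def by (simp add: vec_eq_iff)
qed

lemma refl_comp: "a \<noteq> 0 \<Longrightarrow> refl B a z (refl B a w v) = refl B a (z * w) v"
proof -
  assume a: "a \<noteq> 0"
  have aa: "B a a \<noteq> 0" using a self_nz by auto
  have "B (refl B a w v) a = w * B v a" using aa
    by (simp add: refl_def diff_l scale_l field_simps)
  then show ?thesis using aa by (simp add: refl_def vec_eq_iff field_simps)
qed

lemma refl_one: "refl B a 1 = id" by (rule ext) (simp add: refl_def)

lemma refl_pow: "a \<noteq> 0 \<Longrightarrow> refl B a (z ^ Suc k) v = refl B a z (refl B a (z ^ k) v)"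
  by (simp add: refl_comp)

end


lemma fspan_full:
  assumes "finite bs" "v \<in> fspan F bs" "0 \<in> F"
  shows "\<exists>c. v = (\<Sum>x\<in>bs. c x *s x) \<and> (\<forall>x\<in>bs. c x \<in> F)"
proof -
  obtain T c where T: "v = (\<Sum>x\<in>T. c x *s x)" "finite T" "T \<subseteq> bs" "\<forall>x\<in>T. c x \<in> F"
    using assms(2) unfolding fspan_def by blast
  define c' where "c' x = (if x \<in> T then c x else 0)" for x
  have "(\<Sum>x\<in>bs. c' x *s x) = (\<Sum>x\<in>T. c' x *s x)"
    by (rule sum.mono_neutral_right[OF assms(1) T(3)]) (auto simp: c'_def)
  also have "\<dots> = (\<Sum>x\<in>T. c x *s x)" by (rule sum.cong) (auto simp: c'_def)
  finally have "v = (\<Sum>x\<in>bs. c' x *s x)" using T(1) by simp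
  moreover have "\<forall>x\<in>bs. c' x \<in> F" using T(4) assms(3) by (auto simp: c'_def)
  ultimately show ?thesis by (intro exI[of _ c']) blast
qed

lemma vec_uniq:
  assumes "finite bs" "vec.independent bs" "(\<Sum>x\<in>bs. c x *s x) = (\<Sum>x\<in>bs. c' x *s x)" "x \<in> bs"
  shows "c x = c' x"
proof -
  have "(\<Sum>x\<in>bs. (c x - c' x) *s x) = (\<Sum>x\<in>bs. c x *s x) - (\<Sum>x\<in>bs. c' x *s x)"
    by (simp only: vec.scale_left_diff_distrib sum_subtractf)
  then have "(\<Sum>x\<in>bs. (c x - c' x) *s x) = 0" using assms(3) by simp
  show ?thesis
  proof (rule ccontr)
    assume ne: "c x \<noteq> c' x"
    have "vec.dependent bs"
      unfolding vec.dependent_finite[OF assms(1)]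
      by (rule exI[of _ "\<lambda>v. c v - c' v"]) (use ne assms(4) \<open>(\<Sum>x\<in>bs. (c x - c' x) *s x) = 0\<close> in auto)
    then show False using assms(2) by simp
  qed
qed

lemma F_coef:
  assumes FF: "F_form F B U" and sf: "subfield F" and u: "u \<in> U" and b: "b \<in> U" "b \<noteq> 0"
    and ul: "u = l *s b"
  shows "l \<in> F"
proof -
  obtain bs where bs: "finite bs" "vec.independent bs" "U = fspan F bs"
    using FF unfolding F_form_def by blast
  have zF: "0 \<in> F" using sf unfolding subfield_def by blast
  obtain \<beta> where be: "b = (\<Sum>x\<in>bs. \<beta> x *s x)" "\<forall>x\<in>bs. \<beta> x \<in> F"
    using fspan_full[OF bs(1) _ zF] b bs(3) by blast
  obtain \<gamma> where ga: "u = (\<Sum>x\<in>bs. \<gamma> x *s x)" "\<forall>x\<in>bs. \<gamma> x \<in> F"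
    using fspan_full[OF bs(1) _ zF] u bs(3) by blast
  have "u = (\<Sum>x\<in>bs. (l * \<beta> x) *s x)"
    using ul be(1) by (simp add: vec.scale_sum_right)
  then have "(\<Sum>x\<in>bs. \<gamma> x *s x) = (\<Sum>x\<in>bs. (l * \<beta> x) *s x)" using ga(1) by simp
  then have eq: "\<forall>x\<in>bs. \<gamma> x = l * \<beta> x"
    using vec_uniq[OF bs(1) bs(2), of \<gamma> "\<lambda>x. l * \<beta> x"] by blast
  have "\<exists>x\<in>bs. \<beta> x \<noteq> 0"
  proof (rule ccontr)
    assume "\<not> (\<exists>x\<in>bs. \<beta> x \<noteq> 0)"
    then have "\<forall>x\<in>bs. \<beta> x = 0" by blast
    then have "b = 0" using be(1) by simp
    then show False using b(2) by simp
  qed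
  then obtain x where x: "x \<in> bs" "\<beta> x \<noteq> 0" by blast
  have "l = \<gamma> x * inverse (\<beta> x)" using eq x by (simp add: field_simps)
  moreover have "inverse (\<beta> x) \<in> F" using sf x be(2) unfolding subfield_def by blast
  moreover have "\<gamma> x \<in> F" using ga(2) x(1) by blast
  moreover have "\<forall>p\<in>F. \<forall>q\<in>F. p * q \<in> F" using sf unfolding subfield_def by blast
  ultimately show ?thesis by simp
qed


abbreviation hinv :: "('a \<Rightarrow> 'b) \<Rightarrow> 'b \<Rightarrow> 'a" where "hinv \<equiv> Hilbert_Choice.inv"

locale msetting = rsys B \<Phi> for B :: "complex ^ 'n::finite \<Rightarrow> complex ^ 'n \<Rightarrow> complex" and \<Phi> +
  fixes G P :: "(complex ^ 'n \<Rightarrow> complex ^ 'n) set" and X \<Sigma> \<Delta> :: "(complex ^ 'n) set"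
    and \<gamma> :: complex and h :: nat and \<mu> :: "complex set"
  assumes Gfin: "finite G" and Gid: "id \<in> G"
    and Gbij: "g \<in> G \<Longrightarrow> bij g" and Ginv: "g \<in> G \<Longrightarrow> hinv g \<in> G"
    and Gcomp: "g \<in> G \<Longrightarrow> g' \<in> G \<Longrightarrow> g \<circ> g' \<in> G"
    and Glin: "g \<in> G \<Longrightarrow> clinear g"
    and Gform: "g \<in> G \<Longrightarrow> B (g u) (g v) = B u v"
    and PX: "P = {g\<in>G. \<forall>v\<in>X. g v = v}"
    and Pgen: "P = gen_by ((\<lambda>a. R a) ` \<Phi>)"
    and Prefl: "{g\<in>P. is_reflection g} = (\<lambda>a. R a) ` \<Phi>"
    and SS: "simple_system \<Phi> \<Delta>"
    and hpos: "h > 0" and hodd: "odd h" and gh: "\<gamma> ^ h = 1"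
    and mu: "\<mu> = {s * \<gamma> ^ i | s i. s \<in> {1, -1} \<and> i < h}"
    and Gsig: "g \<in> G \<Longrightarrow> a \<in> \<Sigma> \<Longrightarrow> g a \<in> \<Sigma>"
    and PhiSig: "\<Phi> \<subseteq> \<Sigma>"
    and mul_root: "b \<in> \<Sigma> \<Longrightarrow> l *s b \<in> \<Sigma> \<Longrightarrow> l \<in> \<mu>"
begin

definition Dt where "Dt = {\<gamma> ^ i *s d | i d. i < h \<and> d \<in> \<Delta>}"
definition H where "H = {g\<in>G. g ` Dt = Dt}"

lemma PG: "P \<subseteq> G" using PX by blast
lemma P_id: "id \<in> P" using PX Gid by simp
lemma P_comp: "p \<in> P \<Longrightarrow> q \<in> P \<Longrightarrow> p \<circ> q \<in> P" using PX Gcomp by auto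
lemma P_inv: "p \<in> P \<Longrightarrow> hinv p \<in> P"
proof -
  assume p: "p \<in> P"
  have pG: "p \<in> G" using p PX by blast
  have "\<forall>v\<in>X. hinv p v = v"
  proof
    fix v assume "v \<in> X"
    then have "p v = v" using p PX by blast
    then show "hinv p v = v" using inv_f_f[OF bij_is_inj[OF Gbij[OF pG]], of v] by simp
  qed
  then show ?thesis using Ginv[OF pG] PX by blast
qed

lemma gen_Phi: "p \<in> gen_by ((\<lambda>a. R a) ` \<Phi>) \<Longrightarrow> a \<in> \<Phi> \<Longrightarrow> p a \<in> \<Phi>"
proof (induction p arbitrary: a rule: gen_by.induct)
  case gen_id then show ?case by simp
next
  case (gen_mult s g) then show ?case using RP by auto
next
  case (gen_inv s g)
  then obtain b where b: "b \<in> \<Phi>" "s = R b" by blast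
  have "hinv s = R b" using b R_inv nzP by simp
  then show ?case using gen_inv RP b by simp
qed

lemma gen_O: "p \<in> gen_by ((\<lambda>a. R a) ` \<Phi>) \<Longrightarrow> \<forall>a\<in>\<Phi>. B v a = 0 \<Longrightarrow> p v = v"
proof (induction p rule: gen_by.induct)
  case gen_id then show ?case by simp
next
  case (gen_mult s g)
  then obtain b where b: "b \<in> \<Phi>" "s = R b" by blast
  then show ?case using gen_mult by (simp add: R_eq)
next
  case (gen_inv s g)
  then obtain b where b: "b \<in> \<Phi>" "s = R b" by blast
  have "hinv s = R b" using b R_inv nzP by simp
  then show ?case using gen_inv b by (simp add: R_eq)
qed

lemma gpow: "(\<gamma> ^ i) ^ h = 1"
proof -
  have "(\<gamma> ^ i) ^ h = (\<gamma> ^ h) ^ i" by (simp add: power_mult[symmetric] mult.commute)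
  then show ?thesis using gh by simp
qed

lemma gpow_real: "\<gamma> ^ i \<in> \<real> \<Longrightarrow> \<gamma> ^ i = 1"
  using real_root_one[OF _ gpow hodd] by blast

lemma g_nz: "\<gamma> \<noteq> 0"
proof
  assume "\<gamma> = 0"
  then have "\<gamma> ^ h = 0" using hpos by simp
  then show False using gh by simp
qed

lemma Dt_fin: "finite Dt"
proof -
  have "Dt = (\<lambda>(i, d). \<gamma> ^ i *s d) ` ({..<h} \<times> \<Delta>)" unfolding Dt_def by auto
  then show ?thesis using ss_fin[OF SS] by simp
qed

lemma D_Dt: "d \<in> \<Delta> \<Longrightarrow> d \<in> Dt"
  unfolding Dt_def using hpos by (intro CollectI exI[of _ 0] exI[of _ d]) simp

end


context msetting begin

lemma R_funpow2: "c \<noteq> 0 \<Longrightarrow> (R c) ^^ 2 = id"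
proof -
  assume c: "c \<noteq> 0"
  have "(R c) ^^ 2 = R c \<circ> R c" by (simp add: numeral_2_eq_2)
  then show ?thesis using R_comp_R[OF c] by simp
qed

lemma conj_R:
  assumes g: "g \<in> G"
  shows "g \<circ> R a \<circ> hinv g = R (g a)"
proof
  fix v
  have wf: "\<forall>x y. B (g x) (g y) = B x y" using Gform[OF g] by blast
  have sv: "g (hinv g v) = v" using surj_f_inv_f[OF bij_is_surj[OF Gbij[OF g]]] by simp
  have "(g \<circ> R a \<circ> hinv g) v = g (R a (hinv g v))" by simp
  also have "\<dots> = R (g a) (g (hinv g v))" using R_conj[OF Glin[OF g] wf] by simp
  also have "\<dots> = R (g a) v" using sv by simp
  finally show "(g \<circ> R a \<circ> hinv g) v = R (g a) v" .
qed

lemma fixed_conj: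
  assumes g: "g \<in> G"
  shows "fixed_space (R (g a)) = g ` fixed_space (R a)"
proof -
  have inj: "inj g" using bij_is_inj[OF Gbij[OF g]] .
  have wf: "\<forall>x y. B (g x) (g y) = B x y" using Gform[OF g] by blast
  have key: "R (g a) (g w) = g (R a w)" for w using R_conj[OF Glin[OF g] wf] by simp
  show ?thesis
  proof
    show "fixed_space (R (g a)) \<subseteq> g ` fixed_space (R a)"
    proof
      fix v assume v: "v \<in> fixed_space (R (g a))"
      define w where "w = hinv g v"
      have vw: "v = g w" unfolding w_def using surj_f_inv_f[OF bij_is_surj[OF Gbij[OF g]]] by simp
      have "g (R a w) = g w" using v vw key[of w] by (simp add: fixed_space_def)
      then have "R a w = w" using inj by (simp add: inj_eq)
      then show "v \<in> g ` fixed_space (R a)" using vw by (simp add: fixed_space_def)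
    qed
    show "g ` fixed_space (R a) \<subseteq> fixed_space (R (g a))"
      using key by (auto simp: fixed_space_def)
  qed
qed

lemma N_root:
  assumes gN: "g \<in> normaliser G P" and a: "a \<in> \<Phi>"
  shows "\<exists>i<h. \<exists>b\<in>\<Phi>. g a = \<gamma> ^ i *s b"
proof -
  have g: "g \<in> G" and gP: "(\<lambda>p. g \<circ> p \<circ> hinv g) ` P = P" using gN unfolding normaliser_def by simp_all
  have RaP: "R a \<in> P" unfolding Pgen by (rule gen_by_gen) (use a in blast)
  have "g \<circ> R a \<circ> hinv g \<in> (\<lambda>p. g \<circ> p \<circ> hinv g) ` P" using RaP by (rule imageI)
  then have "g \<circ> R a \<circ> hinv g \<in> P" unfolding gP .
  then have RgaP: "R (g a) \<in> P" using conj_R[OF g] by simp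
  have inj: "inj g" using bij_is_inj[OF Gbij[OF g]] .
  have ga0: "g a \<noteq> 0"
  proof
    assume "g a = 0"
    then have "g a = g 0" using clinear_0[OF Glin[OF g]] by simp
    then have "a = 0" using inj by (simp add: inj_eq)
    then show False using nzP[OF a] by simp
  qed
  have "R a \<in> {g\<in>P. is_reflection g}" unfolding Prefl using a by (rule imageI)
  then have reflRa: "is_reflection (R a)" by simp
  have dimRa: "vec.dim (fixed_space (R a)) = CARD('n) - 1" using reflRa by (simp add: is_reflection_def)
  have lin: "Vector_Spaces.linear (*s) (*s) g" using Glin[OF g] by (simp add: clinear_def)
  have "vec.dim (g ` fixed_space (R a)) = vec.dim (fixed_space (R a))"
    by (rule vec.dim_image_eq[OF lin inj_on_subset[OF inj subset_UNIV]])
  then have dimRga: "vec.dim (fixed_space (R (g a))) = CARD('n) - 1"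
    using fixed_conj[OF g] dimRa by simp
  have "is_reflection (R (g a))"
    unfolding is_reflection_def
    using refl_clinear R_funpow2[OF ga0] dimRga by (intro conjI exI[of _ 2]) auto
  then have "R (g a) \<in> {g\<in>P. is_reflection g}" using RgaP by simp
  then have "R (g a) \<in> (\<lambda>a. R a) ` \<Phi>" unfolding Prefl .
  then obtain b where b: "b \<in> \<Phi>" "R (g a) = R b" by blast
  define l where "l = B (g a) b / B b b"
  have gal: "g a = l *s b" unfolding l_def by (rule R_eq_line[OF ga0 b(2)])
  have gaS: "g a \<in> \<Sigma>" using Gsig[OF g] a PhiSig by blast
  have bS: "b \<in> \<Sigma>" using b PhiSig by blast
  have "l \<in> \<mu>" using mul_root[OF bS] gaS gal by simp
  then obtain s i where si: "l = s * \<gamma> ^ i" "s \<in> {1, -1}" "i < h" using mu by blast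
  show ?thesis
  proof (cases "s = 1")
    case True
    then have "g a = \<gamma> ^ i *s b" using gal si by simp
    then show ?thesis using si(3) b(1) by blast
  next
    case False
    then have "s = -1" using si(2) by simp
    then have "g a = \<gamma> ^ i *s (- b)" using gal si by (simp add: vec_eq_iff)
    then show ?thesis using si(3) negP[OF b(1)] by blast
  qed
qed

end


context msetting begin

lemma N_decomp:
  assumes gN: "g \<in> normaliser G P"
  shows "\<exists>p\<in>P. \<exists>k\<in>H. g = p \<circ> k"
proof -
  have g: "g \<in> G" using gN unfolding normaliser_def by simp
  have "\<forall>a\<in>\<Phi>. \<exists>i. i < h \<and> (\<exists>b\<in>\<Phi>. g a = \<gamma> ^ i *s b)" using N_root[OF gN] by blast
  then obtain I where I: "\<forall>a\<in>\<Phi>. I a < h \<and> (\<exists>b\<in>\<Phi>. g a = \<gamma> ^ I a *s b)"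
    using bchoice[of \<Phi> "\<lambda>a i. i < h \<and> (\<exists>b\<in>\<Phi>. g a = \<gamma> ^ i *s b)"] by blast
  then have "\<forall>a\<in>\<Phi>. \<exists>b. b \<in> \<Phi> \<and> g a = \<gamma> ^ I a *s b" by blast
  then obtain \<psi> where psi: "\<forall>a\<in>\<Phi>. \<psi> a \<in> \<Phi> \<and> g a = \<gamma> ^ I a *s \<psi> a"
    using bchoice[of \<Phi> "\<lambda>a b. b \<in> \<Phi> \<and> g a = \<gamma> ^ I a *s b"] by blast
  have into: "\<psi> ` \<Phi> \<subseteq> \<Phi>" using psi by blast
  have Bp: "\<forall>a\<in>\<Phi>. \<forall>b\<in>\<Phi>. B (\<psi> a) (\<psi> b) = B a b"
  proof (intro ballI)
    fix a b assume a: "a \<in> \<Phi>" and b: "b \<in> \<Phi>"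
    define c where "c = \<gamma> ^ I a * cnj (\<gamma> ^ I b)"
    have "B a b = B (g a) (g b)" using Gform[OF g] by simp
    also have "\<dots> = B (\<gamma> ^ I a *s \<psi> a) (\<gamma> ^ I b *s \<psi> b)" using psi a b by simp
    also have "\<dots> = c * B (\<psi> a) (\<psi> b)" by (simp add: scale_l scale_r c_def)
    finally have e: "B a b = c * B (\<psi> a) (\<psi> b)" .
    have ch: "c ^ h = 1" using gpow[of "I a"] gpow[of "I b"]
      by (simp add: c_def power_mult_distrib flip: complex_cnj_power)
    have c0: "c \<noteq> 0"
    proof
      assume "c = 0"
      then have "c ^ h = 0" using hpos by simp
      then show False using ch by simp
    qed
    show "B (\<psi> a) (\<psi> b) = B a b"
    proof (cases "B (\<psi> a) (\<psi> b) = 0")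
      case True then show ?thesis using e by simp
    next
      case False
      have "c = B a b / B (\<psi> a) (\<psi> b)" using e False by simp
      moreover have "B a b \<in> \<real>" using realP a b by blast
      moreover have "B (\<psi> a) (\<psi> b) \<in> \<real>" using realP psi a b by blast
      ultimately have "c \<in> \<real>" by simp
      then have "c = 1" using real_root_one[OF _ ch hodd] by blast
      then show ?thesis using e by simp
    qed
  qed
  have SS': "simple_system \<Phi> (\<psi> ` \<Delta>)" by (rule iso_ss[OF SS Bp into])
  obtain w where w: "w \<in> gen_by ((\<lambda>a. R a) ` \<Phi>)" "w ` (\<psi> ` \<Delta>) = \<Delta>"
    using transitive[OF SS SS'] by blast
  have wP: "w \<in> P" using w(1) Pgen by simp
  have wG: "w \<in> G" using wP PG by blast
  define k where "k = w \<circ> g"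
  have kG: "k \<in> G" unfolding k_def by (rule Gcomp[OF wG g])
  have sub: "k ` Dt \<subseteq> Dt"
  proof
    fix y assume "y \<in> k ` Dt"
    then obtain j d where jd: "j < h" "d \<in> \<Delta>" "y = k (\<gamma> ^ j *s d)" unfolding Dt_def by blast
    have dP: "d \<in> \<Phi>" using jd(2) ss_sub[OF SS] by blast
    have wd: "w (\<psi> d) \<in> \<Delta>" using w(2) jd(2) by blast
    have "y = w (g (\<gamma> ^ j *s d))" using jd(3) by (simp add: k_def)
    also have "\<dots> = w (\<gamma> ^ j *s (\<gamma> ^ I d *s \<psi> d))" using clinear_scale[OF Glin[OF g]] psi dP by simp
    also have "\<dots> = (\<gamma> ^ j * \<gamma> ^ I d) *s w (\<psi> d)" using clinear_scale[OF Glin[OF wG]] by simp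
    also have "\<dots> = \<gamma> ^ ((j + I d) mod h) *s w (\<psi> d)" using gamma_mod[OF gh, of "j + I d"] by (simp add: power_add)
    finally have "y = \<gamma> ^ ((j + I d) mod h) *s w (\<psi> d)" .
    moreover have "(j + I d) mod h < h" using hpos by simp
    ultimately show "y \<in> Dt" unfolding Dt_def using wd by blast
  qed
  have "k ` Dt = Dt" by (rule endo_inj_surj[OF Dt_fin sub inj_on_subset[OF bij_is_inj[OF Gbij[OF kG]] subset_UNIV]])
  then have kH: "k \<in> H" using kG unfolding H_def by simp
  have "hinv w \<circ> k = (hinv w \<circ> w) \<circ> g" by (simp add: k_def comp_assoc)
  also have "hinv w \<circ> w = id" using inv_o_cancel[OF bij_is_inj[OF Gbij[OF wG]]] .
  finally have "hinv w \<circ> k = g" by (simp only: id_comp)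
  then have "g = hinv w \<circ> k" by (rule sym)
  then show ?thesis using P_inv[OF wP] kH by blast
qed

end


context msetting begin

lemma X_O: "x \<in> X \<Longrightarrow> a \<in> \<Phi> \<Longrightarrow> B x a = 0"
proof -
  assume x: "x \<in> X" and a: "a \<in> \<Phi>"
  have "R a \<in> P" unfolding Pgen by (rule gen_by_gen) (use a in blast)
  then have "R a x = x" using x PX by blast
  then have "(2 * B x a / B a a) *s a = 0" by (simp add: R_eq)
  then have "2 * B x a / B a a = 0" using nzP[OF a] by (simp add: vec.scale_eq_0_iff)
  then show "B x a = 0" using self_nz[OF nzP[OF a]] by simp
qed

lemma H_inv: "k \<in> H \<Longrightarrow> hinv k \<in> H"
proof -
  assume k: "k \<in> H"
  have kG: "k \<in> G" and kD: "k ` Dt = Dt" using k unfolding H_def by auto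
  have "hinv k ` Dt = hinv k ` (k ` Dt)" using kD by simp
  also have "\<dots> = Dt" by (rule image_inv_f_f[OF bij_is_inj[OF Gbij[OF kG]]])
  finally show ?thesis using Ginv[OF kG] unfolding H_def by simp
qed

lemma H_conj: "k \<in> H \<Longrightarrow> q \<in> P \<Longrightarrow> k \<circ> q \<circ> hinv k \<in> P"
proof -
  assume k: "k \<in> H" and q: "q \<in> P"
  have kG: "k \<in> G" and kD: "k ` Dt = Dt" using k unfolding H_def by auto
  have qG: "q \<in> G" using q PG by blast
  have qgen: "q \<in> gen_by ((\<lambda>a. R a) ` \<Phi>)" using q Pgen by simp
  have invO: "\<forall>a\<in>\<Phi>. B (hinv k v) a = 0" if v: "\<forall>a\<in>\<Phi>. B v a = 0" for v
  proof
    fix a assume a: "a \<in> \<Phi>"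
    obtain c where c: "a = (\<Sum>d\<in>\<Delta>. c d *\<^sub>R d)" using ss_rep[OF SS a] by blast
    have "B (hinv k v) a = B (k (hinv k v)) (k a)" using Gform[OF kG] by simp
    also have "k (hinv k v) = v" using surj_f_inv_f[OF bij_is_surj[OF Gbij[OF kG]]] by simp
    also have "k a = (\<Sum>d\<in>\<Delta>. c d *\<^sub>R k d)"
    proof -
      have "k a = (\<Sum>d\<in>\<Delta>. k (c d *\<^sub>R d))" unfolding c by (rule clinear_sum[OF Glin[OF kG]])
      also have "\<dots> = (\<Sum>d\<in>\<Delta>. c d *\<^sub>R k d)" by (rule sum.cong[OF refl]) (rule clinear_scaleR[OF Glin[OF kG]])
      finally show ?thesis .
    qed
    also have "B v (\<Sum>d\<in>\<Delta>. c d *\<^sub>R k d) = (\<Sum>d\<in>\<Delta>. of_real (c d) * B v (k d))"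
      by (simp add: sum_r scaleR_r)
    also have "\<dots> = 0"
    proof (rule sum.neutral, rule ballI)
      fix d assume d: "d \<in> \<Delta>"
      have "k d \<in> Dt" using kD D_Dt[OF d] by blast
      then obtain i e where ie: "k d = \<gamma> ^ i *s e" "e \<in> \<Delta>" unfolding Dt_def by blast
      have "e \<in> \<Phi>" using ie(2) ss_sub[OF SS] by blast
      then have "B v e = 0" using v by blast
      then show "of_real (c d) * B v (k d) = 0" using ie(1) by (simp add: scale_r)
    qed
    finally show "B (hinv k v) a = 0" .
  qed
  have "\<forall>x\<in>X. (k \<circ> q \<circ> hinv k) x = x"
  proof
    fix x assume x: "x \<in> X"
    have "\<forall>a\<in>\<Phi>. B x a = 0" using X_O x by blast
    then have "q (hinv k x) = hinv k x" using gen_O[OF qgen] invO by blast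
    then show "(k \<circ> q \<circ> hinv k) x = x"
      using surj_f_inv_f[OF bij_is_surj[OF Gbij[OF kG]]] by simp
  qed
  moreover have "k \<circ> q \<circ> hinv k \<in> G" using Gcomp[OF Gcomp[OF kG qG] Ginv[OF kG]] .
  ultimately show ?thesis using PX by blast
qed

lemma H_sub_N: "k \<in> H \<Longrightarrow> k \<in> normaliser G P"
proof -
  assume k: "k \<in> H"
  have kG: "k \<in> G" using k unfolding H_def by auto
  have "hinv (hinv k) = k" using inv_inv_eq[OF Gbij[OF kG]] .
  then have b: "\<forall>q\<in>P. hinv k \<circ> q \<circ> k \<in> P" using H_conj[OF H_inv[OF k]] by simp
  have "(\<lambda>q. k \<circ> q \<circ> hinv k) ` P = P"
    by (rule conj_image[OF Gbij[OF kG]]) (use H_conj[OF k] b in blast)+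
  then show ?thesis using kG unfolding normaliser_def by simp
qed

lemma PH_sub_N: "p \<in> P \<Longrightarrow> k \<in> H \<Longrightarrow> p \<circ> k \<in> normaliser G P"
proof -
  assume p: "p \<in> P" and k: "k \<in> H"
  have kG: "k \<in> G" using k unfolding H_def by auto
  have pG: "p \<in> G" using p PG by blast
  have bp: "bij p" and bk: "bij k" using Gbij pG kG by auto
  have ik: "hinv (hinv k) = k" using inv_inv_eq[OF bk] .
  have inv_pk: "hinv (p \<circ> k) = hinv k \<circ> hinv p" using o_inv_distrib[OF bp bk] .
  have a: "\<forall>q\<in>P. (p \<circ> k) \<circ> q \<circ> hinv (p \<circ> k) \<in> P"
  proof
    fix q assume q: "q \<in> P"
    have "(p \<circ> k) \<circ> q \<circ> hinv (p \<circ> k) = p \<circ> (k \<circ> q \<circ> hinv k) \<circ> hinv p"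
      using inv_pk by (simp add: comp_assoc)
    then show "(p \<circ> k) \<circ> q \<circ> hinv (p \<circ> k) \<in> P"
      using P_comp[OF P_comp[OF p H_conj[OF k q]] P_inv[OF p]] by simp
  qed
  have b: "\<forall>q\<in>P. hinv (p \<circ> k) \<circ> q \<circ> (p \<circ> k) \<in> P"
  proof
    fix q assume q: "q \<in> P"
    have q': "hinv p \<circ> q \<circ> p \<in> P" using P_comp[OF P_comp[OF P_inv[OF p] q] p] .
    have "hinv (p \<circ> k) \<circ> q \<circ> (p \<circ> k) = hinv k \<circ> (hinv p \<circ> q \<circ> p) \<circ> hinv (hinv k)"
      using inv_pk ik by (simp add: comp_assoc)
    then show "hinv (p \<circ> k) \<circ> q \<circ> (p \<circ> k) \<in> P"
      using H_conj[OF H_inv[OF k] q'] by simp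
  qed
  have "(\<lambda>q. (p \<circ> k) \<circ> q \<circ> hinv (p \<circ> k)) ` P = P"
    by (rule conj_image[OF bij_comp[OF bk bp] a b])
  moreover have "p \<circ> k \<in> G" using Gcomp[OF pG kG] .
  ultimately show ?thesis unfolding normaliser_def by simp
qed

lemma PH_trivial: "P \<inter> H = {id}"
proof
  show "{id} \<subseteq> P \<inter> H" using P_id Gid unfolding H_def by simp
  show "P \<inter> H \<subseteq> {id}"
  proof
    fix p assume "p \<in> P \<inter> H"
    then have p: "p \<in> P" and pG: "p \<in> G" and pD: "p ` Dt = Dt" unfolding H_def by auto
    have pgen: "p \<in> gen_by ((\<lambda>a. R a) ` \<Phi>)" using p Pgen by simp
    have sub: "p ` \<Delta> \<subseteq> \<Delta>"
    proof
      fix y assume "y \<in> p ` \<Delta>"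
      then obtain d where d: "d \<in> \<Delta>" "y = p d" by blast
      have "p d \<in> Dt" using pD D_Dt[OF d(1)] by blast
      then obtain i e where ie: "p d = \<gamma> ^ i *s e" "e \<in> \<Delta>" unfolding Dt_def by blast
      have dP: "d \<in> \<Phi>" and eP: "e \<in> \<Phi>" using d(1) ie(2) ss_sub[OF SS] by auto
      have pdP: "p d \<in> \<Phi>" using gen_Phi[OF pgen dP] .
      have "B (p d) e = \<gamma> ^ i * B e e" using ie(1) by (simp add: scale_l)
      moreover have "B e e \<noteq> 0" using self_nz[OF nzP[OF eP]] .
      ultimately have "\<gamma> ^ i = B (p d) e / B e e" by simp
      moreover have "B (p d) e \<in> \<real>" using realP pdP eP by blast
      moreover have "B e e \<in> \<real>" using realP eP by blast
      ultimately have "\<gamma> ^ i \<in> \<real>" by simp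
      then have "\<gamma> ^ i = 1" by (rule gpow_real)
      then show "y \<in> \<Delta>" using ie d by simp
    qed
    have "p ` \<Delta> = \<Delta>"
      by (rule endo_inj_surj[OF ss_fin[OF SS] sub inj_on_subset[OF bij_is_inj[OF Gbij[OF pG]] subset_UNIV]])
    then have "p = id" using simple_trans[OF SS pgen] by blast
    then show "p \<in> {id}" by simp
  qed
qed

lemma H_group: "is_map_group H"
  unfolding is_map_group_def
proof (intro conjI ballI)
  show "id \<in> H" using Gid unfolding H_def by simp
next
  fix g assume "g \<in> H"
  then show "bij g" using Gbij unfolding H_def by blast
next
  fix g assume "g \<in> H"
  then show "hinv g \<in> H" by (rule H_inv)
next
  fix g g' assume g: "g \<in> H" and g': "g' \<in> H"
  have gG: "g \<in> G" and gD: "g ` Dt = Dt" using g unfolding H_def by auto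
  have gG': "g' \<in> G" and gD': "g' ` Dt = Dt" using g' unfolding H_def by auto
  have "(g \<circ> g') ` Dt = g ` (g' ` Dt)" by (rule image_comp[symmetric])
  also have "\<dots> = Dt" using gD gD' by simp
  finally show "g \<circ> g' \<in> H" using Gcomp[OF gG gG'] unfolding H_def by simp
qed

lemma main: "complement_in (normaliser G P) P H"
  unfolding complement_in_def
proof (intro conjI)
  show "H \<subseteq> normaliser G P" using H_sub_N by blast
  show "is_map_group H" by (rule H_group)
  show "P \<inter> H = {id}" by (rule PH_trivial)
  show "normaliser G P = {p \<circ> k |p k. p \<in> P \<and> k \<in> H}"
  proof
    show "normaliser G P \<subseteq> {p \<circ> k |p k. p \<in> P \<and> k \<in> H}" using N_decomp by blast
    show "{p \<circ> k |p k. p \<in> P \<and> k \<in> H} \<subseteq> normaliser G P" using PH_sub_N by blast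
  qed
qed

end


context hf begin

lemma fin_roots:
  assumes "finite P" "(\<lambda>a. R a) ` \<Phi> \<subseteq> P" "0 \<notin> \<Phi>" "\<forall>a\<in>\<Phi>. \<forall>b\<in>\<Phi>. B a b \<in> \<real>"
    and lines: "\<forall>a\<in>\<Phi>. {x\<in>\<Phi>. \<exists>t::real. x = complex_of_real t *s a} = {a, - a}"
  shows "finite \<Phi>"
proof -
  have fib: "{a\<in>\<Phi>. R a = R a0} \<subseteq> {a0, - a0}" if a0: "a0 \<in> \<Phi>" for a0
  proof
    fix a assume a: "a \<in> {a\<in>\<Phi>. R a = R a0}"
    have a0': "a \<noteq> 0" using a assms(3) by auto
    have e: "a = (B a a0 / B a0 a0) *s a0" using R_eq_line[OF a0'] a by simp
    have "B a a0 / B a0 a0 \<in> \<real>" using assms(4) a a0 by simp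
    then obtain t where "B a a0 / B a0 a0 = complex_of_real t" by (auto elim: Reals_cases)
    then have "a \<in> {x\<in>\<Phi>. \<exists>t::real. x = complex_of_real t *s a0}" using e a by auto
    then show "a \<in> {a0, - a0}" using lines a0 by blast
  qed
  have "\<Phi> \<subseteq> (\<Union>r\<in>(\<lambda>a. R a) ` \<Phi>. {a\<in>\<Phi>. R a = r})" by blast
  moreover have "finite (\<Union>r\<in>(\<lambda>a. R a) ` \<Phi>. {a\<in>\<Phi>. R a = r})"
  proof (rule finite_UN_I)
    show "finite ((\<lambda>a. R a) ` \<Phi>)" using assms(1,2) finite_subset by blast
    fix r assume "r \<in> (\<lambda>a. R a) ` \<Phi>"
    then obtain a0 where "a0 \<in> \<Phi>" "r = R a0" by blast
    then show "finite {a\<in>\<Phi>. R a = r}" using fib finite_subset by blast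
  qed
  ultimately show ?thesis using finite_subset by blast
qed

lemma refl_inv:
  assumes a: "a \<noteq> 0" and z: "z ^ n = 1" "n > 0"
  shows "Hilbert_Choice.inv (refl B a z) = refl B a (z ^ (n - 1))"
proof (rule inv_unique_comp)
  have zz: "z * z ^ (n - 1) = 1" using z by (cases n) auto
  have zz': "z ^ (n - 1) * z = 1" using zz by (simp only: mult.commute)
  show "refl B a z \<circ> refl B a (z ^ (n - 1)) = id"
    by (rule ext) (simp only: comp_apply refl_comp[OF a] zz refl_one)
  show "refl B a (z ^ (n - 1)) \<circ> refl B a z = id"
    by (rule ext) (simp only: comp_apply refl_comp[OF a] zz' refl_one)
qed

lemma refl_pow_in:
  assumes a: "a \<noteq> 0" and cl: "\<forall>b\<in>S. refl B a z b \<in> S"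
  shows "b \<in> S \<Longrightarrow> refl B a (z ^ k) b \<in> S"
proof (induction k arbitrary: b)
  case 0 then show ?case by (simp add: refl_one)
next
  case (Suc k)
  have "refl B a (z ^ Suc k) b = refl B a z (refl B a (z ^ k) b)" by (rule refl_pow[OF a])
  then show ?case using Suc cl by simp
qed

end

theorem theorem4:
  fixes B :: "complex ^ 'n::finite \<Rightarrow> complex ^ 'n \<Rightarrow> complex"
    and G P :: "(complex ^ 'n \<Rightarrow> complex ^ 'n) set"
    and F :: "complex set" and U \<Sigma> \<Phi> \<Delta> :: "(complex ^ 'n) set"
    and f :: "complex ^ 'n \<Rightarrow> complex"
    and \<gamma> :: complex and h :: nat
  assumes form: "herm_form B"
    and G: "unitary_reflection_group B G"
    and F: "finite_abelian_ext F"
    and U: "F_form F B U"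
    and root_sys: "A_root_system F B U G \<Sigma> f"
    and P_par: "parabolic G P"
    and P_cox: "coxeter_type P"
    and Phi_sub: "\<Phi> \<subseteq> {a\<in>\<Sigma>. \<exists>r\<in>P. is_reflection r \<and> vec.span {a} = root_line B r}"
    and Phi_real: "\<forall>a\<in>\<Phi>. \<forall>b\<in>\<Phi>. B a b \<in> \<real>"
    and Phi_lines: "\<forall>a\<in>\<Phi>. {x\<in>\<Phi>. \<exists>t::real. x = complex_of_real t *s a} = {a, - a}"
    and Phi_closed: "\<forall>a\<in>\<Phi>. refl B a (-1) ` \<Phi> = \<Phi>"
    and P_gen: "P = gen_by ((\<lambda>a. refl B a (-1)) ` \<Phi>)"
    and P_refls: "{g\<in>P. is_reflection g} = (\<lambda>a. refl B a (-1)) ` \<Phi>"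
    and h_pos: "h > 0" and h_odd: "odd h"
    and gamma_ord: "\<gamma> ^ h = 1" "\<forall>k. 0 < k \<and> k < h \<longrightarrow> \<gamma> ^ k \<noteq> 1"
    and mu: "roots_of_unity_in (ring_of_integers F) = {s * \<gamma> ^ i | s i. s \<in> {1, -1} \<and> i < h}"
    and Delta: "simple_system \<Phi> \<Delta>"
  shows "complement_in (normaliser G P) P
           {g\<in>G. g ` {\<gamma> ^ i *s d | i d. i < h \<and> d \<in> \<Delta>} = {\<gamma> ^ i *s d | i d. i < h \<and> d \<in> \<Delta>}}"
proof -
  interpret hf B using form by unfold_locales
  define \<mu>' where "\<mu>' = roots_of_unity_in (ring_of_integers F)"
  have Gfin: "finite G" and Gmg: "is_map_group G"
    and Gprops: "\<forall>g\<in>G. clinear g \<and> form_preserving B g"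
    and Ggen: "G = gen_by {g\<in>G. is_reflection g}"
    using G unfolding unitary_reflection_group_def by auto
  have Gid: "id \<in> G" and Gbi: "\<forall>g\<in>G. bij g \<and> hinv g \<in> G" and Gc: "\<forall>g\<in>G. \<forall>g'\<in>G. g \<circ> g' \<in> G"
    using Gmg unfolding is_map_group_def by auto
  have RS: "\<Sigma> \<subseteq> U" "0 \<notin> \<Sigma>" "\<forall>a\<in>\<Sigma>. f a \<in> \<mu>'"
    "G = gen_by ((\<lambda>a. refl B a (f a)) ` \<Sigma>)"
    "\<forall>a\<in>\<Sigma>. \<forall>c\<in>F. c *s a \<in> \<Sigma> \<longleftrightarrow> c \<in> \<mu>'"
    "\<forall>a\<in>\<Sigma>. \<forall>b\<in>\<Sigma>. refl B a (f a) b \<in> \<Sigma>"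
    using root_sys unfolding A_root_system_def Let_def \<mu>'_def by auto
  have sf: "subfield F" using F unfolding finite_abelian_ext_def by blast
  have PhiSig: "\<Phi> \<subseteq> \<Sigma>" using Phi_sub by blast
  obtain X where PX: "P = {g\<in>G. \<forall>v\<in>X. g v = v}" using P_par unfolding parabolic_def by blast
  have PG: "P \<subseteq> G" using PX by blast
  have finP: "finite \<Phi>"
  proof (rule fin_roots[of P])
    show "finite P" using Gfin PG finite_subset by blast
    show "(\<lambda>a. R a) ` \<Phi> \<subseteq> P" using P_refls by blast
    show "0 \<notin> \<Phi>" using PhiSig RS(2) by blast
  qed (use Phi_real Phi_lines in auto)
  interpret rsys B \<Phi>
    by unfold_locales (use finP PhiSig RS(2) Phi_real Phi_lines Phi_closed in auto)
  have Gsig: "g \<in> G \<Longrightarrow> a \<in> \<Sigma> \<Longrightarrow> g a \<in> \<Sigma>" for g a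
  proof -
    assume g: "g \<in> G" and a: "a \<in> \<Sigma>"
    have "g \<in> gen_by ((\<lambda>a. refl B a (f a)) ` \<Sigma>)" using g RS(4) by simp
    then show "g a \<in> \<Sigma>" using a
    proof (induction g arbitrary: a rule: gen_by.induct)
      case gen_id then show ?case by simp
    next
      case (gen_mult s g)
      then obtain c where c: "c \<in> \<Sigma>" "s = refl B c (f c)" by blast
      then show ?case using gen_mult RS(6) by simp
    next
      case (gen_inv s g)
      then obtain c where c: "c \<in> \<Sigma>" "s = refl B c (f c)" by blast
      have c0: "c \<noteq> 0" using c RS(2) by blast
      have "f c \<in> \<mu>'" using RS(3) c by blast
      then obtain n where n: "n > 0" "f c ^ n = 1" unfolding \<mu>'_def roots_of_unity_in_def by blast
      have inv: "hinv s = refl B c (f c ^ (n - 1))" using refl_inv[OF c0 n(2) n(1)] c by simp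
      have ga: "g a \<in> \<Sigma>" using gen_inv by blast
      have cl: "\<forall>b\<in>\<Sigma>. refl B c (f c) b \<in> \<Sigma>" using RS(6) c by blast
      have "refl B c (f c ^ (n - 1)) (g a) \<in> \<Sigma>" by (rule refl_pow_in[OF c0 cl ga])
      then show ?case using inv by simp
    qed
  qed
  have mul_root: "b \<in> \<Sigma> \<Longrightarrow> l *s b \<in> \<Sigma> \<Longrightarrow> l \<in> \<mu>'" for b l
  proof -
    assume b: "b \<in> \<Sigma>" and lb: "l *s b \<in> \<Sigma>"
    have "l \<in> F" by (rule F_coef[OF U sf _ _ _ refl]) (use b lb RS(1) RS(2) in auto)
    then show "l \<in> \<mu>'" using RS(5) b lb by blast
  qed
  interpret M: msetting B \<Phi> G P X \<Sigma> \<Delta> \<gamma> h \<mu>'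
  proof (unfold_locales)
    show "finite G" by (rule Gfin)
    show "id \<in> G" by (rule Gid)
    show "\<And>g. g \<in> G \<Longrightarrow> bij g" using Gbi by blast
    show "\<And>g. g \<in> G \<Longrightarrow> hinv g \<in> G" using Gbi by blast
    show "\<And>g g'. g \<in> G \<Longrightarrow> g' \<in> G \<Longrightarrow> g \<circ> g' \<in> G" using Gc by blast
    show "\<And>g. g \<in> G \<Longrightarrow> clinear g" using Gprops by blast
    show "\<And>g u v. g \<in> G \<Longrightarrow> B (g u) (g v) = B u v" using Gprops unfolding form_preserving_def by blast
    show "P = {g\<in>G. \<forall>v\<in>X. g v = v}" by (rule PX)
    show "P = gen_by ((\<lambda>a. R a) ` \<Phi>)" by (rule P_gen)
    show "{g\<in>P. is_reflection g} = (\<lambda>a. R a) ` \<Phi>" by (rule P_refls)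
    show "simple_system \<Phi> \<Delta>" by (rule Delta)
    show "h > 0" by (rule h_pos)
    show "odd h" by (rule h_odd)
    show "\<gamma> ^ h = 1" by (rule gamma_ord(1))
    show "\<mu>' = {s * \<gamma> ^ i |s i. s \<in> {1, - 1} \<and> i < h}" unfolding \<mu>'_def by (rule mu)
    show "\<And>g a. g \<in> G \<Longrightarrow> a \<in> \<Sigma> \<Longrightarrow> g a \<in> \<Sigma>" by (rule Gsig)
    show "\<Phi> \<subseteq> \<Sigma>" by (rule PhiSig)
    show "\<And>b l. b \<in> \<Sigma> \<Longrightarrow> l *s b \<in> \<Sigma> \<Longrightarrow> l \<in> \<mu>'" by (rule mul_root)
  qed
  show ?thesis using M.main unfolding M.H_def M.Dt_def .
qed


end
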